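(* Let $S(\mathbf{G}(V,E),\mathbf{\Sigma})$ be a constrained switching system with $\mathbf{\Sigma}\subset\mathbb{R}^{n\times n}$. Suppose $\gamma_*=\gamma_*(S)$ is attained by symmetric matrices $\{Q_v\succ0: v\in V\}$, i.e. $\gamma_*^2Q_v-A_\sigma^\top Q_wA_\sigma\succeq0$ for all $(v,w,\sigma)\in E$, and let $\mathcal{M}=\{|\cdot|_v\}$ with $|x|_v=(x^\top Q_vx)^{1/2}$ be the corresponding quadratic multinorm, of value $\gamma_*$. If the set of edges $$E'=\{(v,w,\sigma)\in E : \lambda_{\min}(\gamma_*^2Q_v-A_\sigma^\top Q_wA_\sigma)=0\}$$ forms a simple cycle $c$ in $\mathbf{G}$, then $\mathcal{M}$ is extremal (its value equals $\hat\rho(S)$), and $\hat\rho(S)=\rho(A_c)^{1/T}$, where $T$ is the length of $c$.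
   Context: An automaton $\mathbf{G}(V,E)$ is a strongly connected directed graph with finite node set $V$ and finite edge set $E$ of labelled edges $(v,w,\sigma)$, $\sigma$ indexing a matrix $A_\sigma\in\mathbf{\Sigma}$. A path is a sequence of consecutive edges; for a path with labels $\sigma(1),\dots,\sigma(T)$, $A_p=A_{\sigma(T)}\cdots A_{\sigma(1)}$. A cycle is a path whose source and destination coincide; a cycle is simple if for every node $v$ it visits there is no partition of the cycle into two cycles on $v$. A label sequence is accepted if it is the label sequence of some path (no prescribed initial/final node). The CJSR is $\hat\rho(S)=\lim_{t\to\infty}\max\{\|A_{\sigma(t-1)}\cdots A_{\sigma(0)}\|^{1/t} : \sigma(0),\dots,\sigma(t-1)\text{ accepted}\}$. $\gamma_*(S)$ is the infimum of $\gamma$ such that there exist symmetric $Q_v\succ0$ ($v\in V$) with $\gamma^2Q_v-A_\sigma^\top Q_wA_\sigma\succeq0$ for all $(v,w,\sigma)\in E$. A multinorm is a family of vector norms $\{|\cdot|_v:v\in V\}$; its value is $\min\{\gamma:|A_\sigma x|_w\le\gamma|x|_v\ \forall x,\ \forall(v,w,\sigma)\in E\}$, and it is extremal if its value equals $\hat\rho(S)$. $\rho(\cdot)$ denotes the spectral radius and $\lambda_{\min}$ the smallest eigenvalue of a symmetric matrix. *)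

theory Defs
  imports "HOL-Analysis.Analysis"
begin

text \<open>Nodes have type 'v (node set V), labels have type 's, the label s indexes the
  matrix A s :: real^'n^'n.\<close>

type_synonym ('v,'s) edge = "'v \<times> 'v \<times> 's"

definition esrc :: "('v,'s) edge \<Rightarrow> 'v" where "esrc e = fst e"
definition etgt :: "('v,'s) edge \<Rightarrow> 'v" where "etgt e = fst (snd e)"
definition elab :: "('v,'s) edge \<Rightarrow> 's" where "elab e = snd (snd e)"

definition is_path :: "('v,'s) edge set \<Rightarrow> ('v,'s) edge list \<Rightarrow> bool" where
  "is_path E p \<longleftrightarrow> set p \<subseteq> E \<and> successively (\<lambda>e e'. etgt e = esrc e') p"

definition automaton :: "'v set \<Rightarrow> ('v,'s) edge set \<Rightarrow> bool" where
  "automaton V E \<longleftrightarrow> finite V \<and> finite E \<and>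
     (\<forall>e\<in>E. esrc e \<in> V \<and> etgt e \<in> V) \<and>
     (\<forall>v\<in>V. \<forall>w\<in>V. v \<noteq> w \<longrightarrow>
        (\<exists>p. is_path E p \<and> p \<noteq> [] \<and> esrc (hd p) = v \<and> etgt (last p) = w))"

text \<open>Product of a label sequence s(1),...,s(T): A_{s(T)} ... A_{s(1)}.\<close>
definition label_prod :: "('s \<Rightarrow> real^'n^'n) \<Rightarrow> 's list \<Rightarrow> real^'n^'n" where
  "label_prod A ss = foldl (\<lambda>M s. A s ** M) (mat 1) ss"

definition path_prod :: "('s \<Rightarrow> real^'n^'n) \<Rightarrow> ('v,'s) edge list \<Rightarrow> real^'n^'n" where
  "path_prod A p = label_prod A (map elab p)"

definition accepted :: "('v,'s) edge set \<Rightarrow> nat \<Rightarrow> 's list set" where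
  "accepted E t = {map elab p | p. is_path E p \<and> length p = t}"

definition mnorm :: "real^'n^'n \<Rightarrow> real" where
  "mnorm M = onorm (\<lambda>x. M *v x)"

definition cjsr :: "('v,'s) edge set \<Rightarrow> ('s \<Rightarrow> real^'n^'n) \<Rightarrow> real" where
  "cjsr E A = lim (\<lambda>t. Max ((\<lambda>ss. mnorm (label_prod A ss) powr (1 / real t)) ` accepted E t))"

definition symmetric_mat :: "real^'n^'n \<Rightarrow> bool" where
  "symmetric_mat Q \<longleftrightarrow> transpose Q = Q"

definition pos_def :: "real^'n^'n \<Rightarrow> bool" where
  "pos_def Q \<longleftrightarrow> symmetric_mat Q \<and> (\<forall>x. x \<noteq> 0 \<longrightarrow> x \<bullet> (Q *v x) > 0)"

definition pos_semidef :: "real^'n^'n \<Rightarrow> bool" where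
  "pos_semidef M \<longleftrightarrow> symmetric_mat M \<and> (\<forall>x. x \<bullet> (M *v x) \<ge> 0)"

definition quad_feasible ::
  "'v set \<Rightarrow> ('v,'s) edge set \<Rightarrow> ('s \<Rightarrow> real^'n^'n) \<Rightarrow> real \<Rightarrow> ('v \<Rightarrow> real^'n^'n) \<Rightarrow> bool" where
  "quad_feasible V E A \<gamma> Q \<longleftrightarrow>
     (\<forall>v\<in>V. pos_def (Q v)) \<and>
     (\<forall>e\<in>E. pos_semidef (\<gamma>\<^sup>2 *\<^sub>R Q (esrc e) - transpose (A (elab e)) ** Q (etgt e) ** A (elab e)))"

definition gamma_star :: "'v set \<Rightarrow> ('v,'s) edge set \<Rightarrow> ('s \<Rightarrow> real^'n^'n) \<Rightarrow> real" where
  "gamma_star V E A = Inf {\<gamma>. \<gamma> \<ge> 0 \<and> (\<exists>Q. quad_feasible V E A \<gamma> Q)}"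

definition multinorm_value ::
  "('v,'s) edge set \<Rightarrow> ('s \<Rightarrow> real^'n^'n) \<Rightarrow> ('v \<Rightarrow> real^'n \<Rightarrow> real) \<Rightarrow> real" where
  "multinorm_value E A N =
     Inf {\<gamma>. \<forall>e\<in>E. \<forall>x. N (etgt e) (A (elab e) *v x) \<le> \<gamma> * N (esrc e) x}"

definition extremal ::
  "('v,'s) edge set \<Rightarrow> ('s \<Rightarrow> real^'n^'n) \<Rightarrow> ('v \<Rightarrow> real^'n \<Rightarrow> real) \<Rightarrow> bool" where
  "extremal E A N \<longleftrightarrow> multinorm_value E A N = cjsr E A"

definition quad_norm :: "('v \<Rightarrow> real^'n^'n) \<Rightarrow> 'v \<Rightarrow> real^'n \<Rightarrow> real" where
  "quad_norm Q v x = sqrt (x \<bullet> (Q v *v x))"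

definition lambda_min :: "real^'n^'n \<Rightarrow> real" where
  "lambda_min M = Min {l. \<exists>x. x \<noteq> 0 \<and> M *v x = l *\<^sub>R x}"

definition cmat :: "real^'n^'n \<Rightarrow> complex^'n^'n" where
  "cmat M = (\<chi> i j. complex_of_real (M $ i $ j))"

definition spectral_radius :: "real^'n^'n \<Rightarrow> real" where
  "spectral_radius M = Max (cmod ` {z. \<exists>x::complex^'n. x \<noteq> 0 \<and> cmat M *v x = z *s x})"

definition is_cycle :: "('v,'s) edge set \<Rightarrow> ('v,'s) edge list \<Rightarrow> bool" where
  "is_cycle E c \<longleftrightarrow> is_path E c \<and> c \<noteq> [] \<and> esrc (hd c) = etgt (last c)"

definition simple_cycle :: "('v,'s) edge set \<Rightarrow> ('v,'s) edge list \<Rightarrow> bool" where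
  "simple_cycle E c \<longleftrightarrow> is_cycle E c \<and> distinct (map esrc c)"

end

theory Submission
  imports Defs "Jordan_Normal_Form.Spectral_Radius"
begin


hide_const (open) Spectral_Radius.spectral_radius Matrix.mat Matrix.vec Matrix.row Matrix.col
no_notation Matrix.vec_index (infixl "$" 100)
no_notation Matrix.scalar_prod (infix "\<bullet>" 70)

definition idx :: "nat \<Rightarrow> 'n::finite" where
  "idx = (SOME h. bij_betw h {0..<CARD('n)} (UNIV::'n set))"

lemma idx_bij: "bij_betw (idx::nat\<Rightarrow>'n::finite) {0..<CARD('n)} UNIV"
proof -
  have "\<exists>h. bij_betw h {0..<CARD('n)} (UNIV::'n set)"
    using ex_bij_betw_nat_finite[of "UNIV::'n set"] by simp
  then show ?thesis unfolding idx_def by (rule someI_ex)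
qed

definition jdx :: "'n::finite \<Rightarrow> nat" where "jdx = inv_into {0..<CARD('n)} idx"

lemma jdx_lt: "jdx (k::'n::finite) < CARD('n)"
  unfolding jdx_def using idx_bij[where 'n='n]
  by (metis atLeastLessThan_iff bij_betw_def inv_into_into iso_tuple_UNIV_I)

lemma idx_jdx[simp]: "idx (jdx (k::'n::finite)) = k"
  unfolding jdx_def using idx_bij[where 'n='n]
  by (metis bij_betw_def f_inv_into_f iso_tuple_UNIV_I)

lemma jdx_idx[simp]: "i < CARD('n::finite) \<Longrightarrow> jdx (idx i :: 'n) = i"
  unfolding jdx_def using idx_bij[where 'n='n]
  by (metis atLeastLessThan_iff bij_betw_def inv_into_f_f zero_le)

lemma sum_idx: "(\<Sum>j = 0..<CARD('n::finite). f (idx j :: 'n)) = (\<Sum>k\<in>UNIV. f k)"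
  using sum.reindex_bij_betw[OF idx_bij[where 'n='n], of f] by simp

definition to_m :: "complex^'n^'n \<Rightarrow> complex Matrix.mat" where
  "to_m X = Matrix.mat CARD('n::finite) CARD('n) (\<lambda>(i,j). X $ idx i $ idx j)"
definition to_v :: "complex^'n \<Rightarrow> complex Matrix.vec" where
  "to_v x = Matrix.vec CARD('n::finite) (\<lambda>i. x $ idx i)"
definition from_v :: "complex Matrix.vec \<Rightarrow> complex^'n::finite" where
  "from_v v = (\<chi> k. vec_index v (jdx k))"

lemma to_m_carrier: "to_m (X::complex^'n^'n) \<in> carrier_mat CARD('n::finite) CARD('n)"
  unfolding to_m_def by simp

lemma to_v_mult: "to_v (X *v x) = to_m X *\<^sub>v to_v (x::complex^'n::finite)"
proof (rule eq_vecI)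
  show "dim_vec (to_v (X *v x)) = dim_vec (to_m X *\<^sub>v to_v x)"
    unfolding to_v_def to_m_def by simp
  fix i assume "i < dim_vec (to_m X *\<^sub>v to_v x)"
  then have i: "i < CARD('n)" unfolding to_m_def by simp
  have "vec_index (to_m X *\<^sub>v to_v x) i = (\<Sum>j = 0..<CARD('n). X $ idx i $ idx j * x $ idx j)"
    using i unfolding to_m_def to_v_def by (simp add: scalar_prod_def)
  also have "\<dots> = (\<Sum>k\<in>UNIV. X $ idx i $ k * x $ k)"
    by (rule sum_idx)
  also have "\<dots> = vec_index (to_v (X *v x)) i"
    using i unfolding to_v_def by (simp add: matrix_vector_mult_def)
  finally show "vec_index (to_v (X *v x)) i = vec_index (to_m X *\<^sub>v to_v x) i" by simp
qed

lemma to_m_mult: "to_m (X ** Y) = to_m X * to_m (Y::complex^'n^'n::finite)"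
proof (rule eq_matI)
  fix i j assume "i < dim_row (to_m X * to_m Y)" "j < dim_col (to_m X * to_m Y)"
  then have i: "i < CARD('n)" and j: "j < CARD('n)" unfolding to_m_def by auto
  have "(to_m X * to_m Y) $$ (i, j) = (\<Sum>l = 0..<CARD('n). X $ idx i $ idx l * Y $ idx l $ idx j)"
    using i j unfolding to_m_def by (simp add: scalar_prod_def)
  also have "\<dots> = (\<Sum>k\<in>UNIV. X $ idx i $ k * Y $ k $ idx j)"
    by (rule sum_idx)
  also have "\<dots> = to_m (X ** Y) $$ (i, j)"
    using i j unfolding to_m_def by (simp add: matrix_matrix_mult_def)
  finally show "to_m (X ** Y) $$ (i, j) = (to_m X * to_m Y) $$ (i, j)" by simp
qed (auto simp: to_m_def)

lemma to_m_one: "to_m (mat 1 :: complex^'n^'n::finite) = 1\<^sub>m CARD('n)"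
proof (rule eq_matI)
  fix i j assume "i < dim_row (1\<^sub>m CARD('n))" "j < dim_col (1\<^sub>m CARD('n))"
  then have i: "i < CARD('n)" and j: "j < CARD('n)" by auto
  have "(idx i :: 'n) = idx j \<longleftrightarrow> i = j"
    using i j by (metis jdx_idx)
  then show "to_m (mat 1 :: complex^'n^'n) $$ (i, j) = 1\<^sub>m CARD('n) $$ (i, j)"
    using i j unfolding to_m_def by (simp add: Finite_Cartesian_Product.mat_def)
qed (auto simp: to_m_def)

lemma to_v_inj: "to_v x = to_v y \<Longrightarrow> x = (y::complex^'n::finite)"
proof -
  assume h: "to_v x = to_v y"
  show "x = y"
  proof (rule Finite_Cartesian_Product.vec_eq_iff[THEN iffD2], rule allI)
    fix k :: 'n
    have "vec_index (to_v x) (jdx k) = vec_index (to_v y) (jdx k)" using h by simp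
    then show "x $ k = y $ k" using jdx_lt[of k] unfolding to_v_def by simp
  qed
qed

lemma to_v_carrier: "to_v (x::complex^'n::finite) \<in> carrier_vec CARD('n)"
  unfolding to_v_def by simp

lemma to_v_zero: "to_v (0::complex^'n::finite) = 0\<^sub>v CARD('n)"
  unfolding to_v_def by (rule eq_vecI) auto

lemma to_v_smult: "to_v (z *s (x::complex^'n::finite)) = z \<cdot>\<^sub>v to_v x"
  unfolding to_v_def by (rule eq_vecI) auto

lemma to_v_from_v: "v \<in> carrier_vec CARD('n::finite) \<Longrightarrow> to_v (from_v v :: complex^'n) = v"
  unfolding to_v_def from_v_def by (rule eq_vecI) auto

definition Sv :: "complex^'n^'n \<Rightarrow> complex set" where
  "Sv X = {z. \<exists>x::complex^'n. x \<noteq> 0 \<and> X *v x = z *s x}"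

lemma Sv_spectrum: "Sv (X::complex^'n^'n::finite) = Spectral_Radius.spectrum (to_m X)"
proof (rule Set.set_eqI, rule iffI)
  fix z assume "z \<in> Sv X"
  then obtain x where x: "x \<noteq> 0" "X *v x = z *s x" unfolding Sv_def by auto
  have "eigenvector (to_m X) (to_v x) z"
    unfolding eigenvector_def
  proof (intro conjI)
    show "to_v x \<in> carrier_vec (dim_row (to_m X))" using to_v_carrier[of x] by (simp add: to_m_def)
    show "to_v x \<noteq> 0\<^sub>v (dim_row (to_m X))"
      using x(1) to_v_inj[of x 0] to_v_zero[where 'n='n] by (auto simp: to_m_def)
    show "to_m X *\<^sub>v to_v x = z \<cdot>\<^sub>v to_v x" using x(2) to_v_mult[of X x] to_v_smult[of z x] by simp
  qed
  then show "z \<in> Spectral_Radius.spectrum (to_m X)"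
    unfolding Spectral_Radius.spectrum_def eigenvalue_def by auto
next
  fix z assume "z \<in> Spectral_Radius.spectrum (to_m X)"
  then obtain v where v: "eigenvector (to_m X) v z"
    unfolding Spectral_Radius.spectrum_def eigenvalue_def by auto
  then have vc: "v \<in> carrier_vec CARD('n)" and v0: "v \<noteq> 0\<^sub>v CARD('n)"
    and ve: "to_m X *\<^sub>v v = z \<cdot>\<^sub>v v"
    unfolding eigenvector_def by (auto simp: to_m_def)
  define x where "x = (from_v v :: complex^'n)"
  have tv: "to_v x = v" unfolding x_def using to_v_from_v[OF vc] .
  have "x \<noteq> 0" using tv v0 to_v_zero[where 'n='n] by auto
  moreover have "X *v x = z *s x"
    by (rule to_v_inj) (simp add: to_v_mult to_v_smult tv ve)
  ultimately show "z \<in> Sv X" unfolding Sv_def by auto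
qed

lemma card_pos: "0 < CARD('n::finite)" by simp

lemma Sv_finite: "finite (Sv (X::complex^'n^'n::finite))"
  unfolding Sv_spectrum using card_finite_spectrum(1)[OF to_m_carrier] .

lemma Sv_nonempty: "Sv (X::complex^'n^'n::finite) \<noteq> {}"
  unfolding Sv_spectrum using spectrum_non_empty[OF to_m_carrier card_pos] .

fun mpow :: "'a::comm_ring_1^'n^'n \<Rightarrow> nat \<Rightarrow> 'a^'n^'n" where
  "mpow M 0 = mat 1"
| "mpow M (Suc k) = M ** mpow M k"

lemma mpow_Suc': "mpow M (Suc k) = mpow M k ** M"
  by (induction k) (simp_all add: matrix_mul_assoc)

lemma to_m_mpow: "to_m (mpow (X::complex^'n^'n::finite) k) = to_m X ^\<^sub>m k"
proof (induction k)
  case 0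
  have "dim_row (to_m X) = CARD('n)" using to_m_carrier[of X] by auto
  then show ?case by (simp add: to_m_one)
next
  case (Suc k)
  show ?case unfolding mpow_Suc' to_m_mult Suc by simp
qed

lemma cmat_mult: "cmat (M ** N) = cmat M ** cmat N"
  unfolding cmat_def by (simp add: Finite_Cartesian_Product.vec_eq_iff matrix_matrix_mult_def)

lemma cmat_one: "cmat (mat 1) = mat 1"
  unfolding cmat_def by (simp add: Finite_Cartesian_Product.vec_eq_iff Finite_Cartesian_Product.mat_def)

lemma cmat_mpow: "cmat (mpow M k) = mpow (cmat M) k"
  by (induction k) (simp_all add: cmat_one cmat_mult)

lemma cmat_scaleR_mult: "cmat (a *\<^sub>R M) *v x = complex_of_real a *s (cmat M *v x)"
  unfolding cmat_def by (simp add: Finite_Cartesian_Product.vec_eq_iff matrix_vector_mult_def sum_distrib_left mult.assoc)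




lemma norm2_vec: "(norm (y::real^'n::finite))\<^sup>2 = (\<Sum>i\<in>UNIV. (y$i)\<^sup>2)"
  unfolding power2_norm_eq_inner inner_vec_def by (simp add: power2_eq_square)

lemma mnorm_bound: "norm (M *v x) \<le> mnorm M * norm x"
  unfolding mnorm_def by (rule onorm[OF matrix_vector_mul_bounded_linear])

lemma mnorm_nonneg: "0 \<le> mnorm M"
  unfolding mnorm_def by (rule onorm_pos_le[OF matrix_vector_mul_bounded_linear])

lemma mnorm_le: "(\<And>x. norm (M *v x) \<le> b * norm x) \<Longrightarrow> mnorm M \<le> b"
  unfolding mnorm_def by (rule onorm_le)

lemma mnorm_mult: "mnorm (M ** N) \<le> mnorm M * mnorm N"
proof (rule mnorm_le)
  fix x
  have "norm ((M ** N) *v x) = norm (M *v (N *v x))" by (simp add: matrix_vector_mul_assoc)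
  also have "\<dots> \<le> mnorm M * norm (N *v x)" by (rule mnorm_bound)
  also have "\<dots> \<le> mnorm M * (mnorm N * norm x)"
    by (rule mult_left_mono[OF mnorm_bound mnorm_nonneg])
  finally show "norm ((M ** N) *v x) \<le> mnorm M * mnorm N * norm x" by (simp add: mult.assoc)
qed

lemma eig_le_mnorm:
  fixes N :: "real^'n^'n::finite" and x :: "complex^'n"
  assumes x0: "x \<noteq> 0" and ev: "cmat N *v x = w *s x"
  shows "cmod w \<le> mnorm N"
proof -
  define a where "a = (\<chi> i. Re (x$i))"
  define b where "b = (\<chi> i. Im (x$i))"
  define m where "m = mnorm N"
  have comp: "(cmat N *v x) $ i = (\<Sum>j\<in>UNIV. complex_of_real (N$i$j) * x$j)" for i
    unfolding cmat_def by (simp add: matrix_vector_mult_def)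
  have Na: "(N *v a) $ i = Re w * a$i - Im w * b$i" for i
  proof -
    have "(N *v a) $ i = Re ((cmat N *v x) $ i)"
      unfolding comp a_def by (simp add: matrix_vector_mult_def Re_sum)
    also have "\<dots> = Re w * a$i - Im w * b$i" unfolding ev a_def b_def by simp
    finally show ?thesis .
  qed
  have Nb: "(N *v b) $ i = Im w * a$i + Re w * b$i" for i
  proof -
    have "(N *v b) $ i = Im ((cmat N *v x) $ i)"
      unfolding comp b_def by (simp add: matrix_vector_mult_def Im_sum)
    also have "\<dots> = Im w * a$i + Re w * b$i" unfolding ev a_def b_def by simp
    finally show ?thesis .
  qed
  define S where "S = (norm a)\<^sup>2 + (norm b)\<^sup>2"
  have key: "(norm (N *v a))\<^sup>2 + (norm (N *v b))\<^sup>2 = (cmod w)\<^sup>2 * S"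
  proof -
    have "(norm (N *v a))\<^sup>2 + (norm (N *v b))\<^sup>2
        = (\<Sum>i\<in>UNIV. (Re w * a$i - Im w * b$i)\<^sup>2 + (Im w * a$i + Re w * b$i)\<^sup>2)"
      unfolding norm2_vec Na Nb by (simp add: sum.distrib)
    also have "\<dots> = (\<Sum>i\<in>UNIV. ((Re w)\<^sup>2 + (Im w)\<^sup>2) * ((a$i)\<^sup>2 + (b$i)\<^sup>2))"
      by (rule sum.cong) (auto simp: power2_eq_square algebra_simps)
    also have "\<dots> = (cmod w)\<^sup>2 * S"
      unfolding S_def norm2_vec by (simp add: cmod_power2 sum_distrib_left sum.distrib algebra_simps)
    finally show ?thesis .
  qed
  have m0: "0 \<le> m" unfolding m_def by (rule mnorm_nonneg)
  have "(norm (N *v a))\<^sup>2 \<le> (m * norm a)\<^sup>2"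
    by (rule power_mono) (auto simp: m_def mnorm_bound)
  moreover have "(norm (N *v b))\<^sup>2 \<le> (m * norm b)\<^sup>2"
    by (rule power_mono) (auto simp: m_def mnorm_bound)
  ultimately have le: "(cmod w)\<^sup>2 * S \<le> m\<^sup>2 * S"
    using key unfolding S_def by (simp add: power_mult_distrib algebra_simps)
  obtain i where xi: "x $ i \<noteq> 0" using x0 by (metis Finite_Cartesian_Product.vec_eq_iff zero_index)
  have "0 < (a$i)\<^sup>2 + (b$i)\<^sup>2"
    using xi unfolding a_def b_def
    by (simp add: add_pos_nonneg complex_eq_iff sum_power2_gt_zero_iff)
  have "0 < S"
  proof -
    have "S = (\<Sum>i\<in>UNIV. (a$i)\<^sup>2 + (b$i)\<^sup>2)" unfolding S_def norm2_vec by (simp add: sum.distrib)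
    also have "\<dots> > 0"
      by (rule sum_pos2[of UNIV i]) (use \<open>0 < (a$i)\<^sup>2 + (b$i)\<^sup>2\<close> in auto)
    finally show ?thesis .
  qed
  then have "(cmod w)\<^sup>2 \<le> m\<^sup>2" using le by simp
  then show ?thesis using m0 unfolding m_def by (rule power2_le_imp_le)
qed

lemma sr_def': "spectral_radius M = Max (cmod ` Sv (cmat M))"
  by (simp add: Defs.spectral_radius_def Sv_def)

lemma sr_attained: "\<exists>z\<in>Sv (cmat M). cmod z = spectral_radius (M::real^'n^'n::finite)"
  unfolding sr_def' using Max_in[of "cmod ` Sv (cmat M)"] Sv_finite Sv_nonempty by fastforce

lemma sr_ge: "z \<in> Sv (cmat M) \<Longrightarrow> cmod z \<le> spectral_radius (M::real^'n^'n::finite)"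
  unfolding sr_def' using Sv_finite by (intro Max_ge) auto

lemma sr_nonneg: "0 \<le> spectral_radius (M::real^'n^'n::finite)"
  using sr_attained[of M] by (metis norm_ge_zero)

lemma cmat_mpow_eig: "X *v x = z *s x \<Longrightarrow> mpow X k *v x = z^k *s (x::complex^'n::finite)"
  by (induction k) (simp_all add: matrix_vector_mul_assoc[symmetric] vector_scalar_commute)

lemma gelfand_low:
  assumes "z \<in> Sv (cmat (M::real^'n^'n::finite))"
  shows "cmod z ^ k \<le> mnorm (mpow M k)"
proof -
  obtain x where x: "x \<noteq> 0" "cmat M *v x = z *s x" using assms unfolding Sv_def by auto
  have "cmat (mpow M k) *v x = z^k *s x" unfolding cmat_mpow by (rule cmat_mpow_eig[OF x(2)])
  from eig_le_mnorm[OF x(1) this] show ?thesis by (simp add: norm_power)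
qed

lemma sr_gelfand: "spectral_radius (M::real^'n^'n::finite) ^ k \<le> mnorm (mpow M k)"
  using sr_attained[of M] gelfand_low by metis

lemma scaleR_mult_scaleR: "(a *\<^sub>R M) ** (b *\<^sub>R P) = (a*b) *\<^sub>R (M ** (P::real^'n^'n))"
  by (simp add: Finite_Cartesian_Product.vec_eq_iff matrix_matrix_mult_def sum_distrib_left algebra_simps)

lemma mpow_scaleR: "mpow (a *\<^sub>R M) k = (a^k) *\<^sub>R mpow (M::real^'n^'n) k"
  by (induction k) (simp_all add: scaleR_mult_scaleR)

lemma mnorm_scaleR: "mnorm (a *\<^sub>R M) = \<bar>a\<bar> * mnorm M"
proof -
  have "(\<lambda>x. (a *\<^sub>R M) *v x) = (\<lambda>x. a *\<^sub>R (M *v x))" by (simp add: scaleR_matrix_vector_assoc)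
  then show ?thesis unfolding mnorm_def
    using onorm_scaleR[OF matrix_vector_mul_bounded_linear, of a M] by (metis (no_types))
qed

lemma pow_bound:
  assumes lt: "spectral_radius (M::real^'n^'n::finite) < s"
  shows "\<exists>C. \<forall>k. mnorm (mpow M k) \<le> C * s^k"
proof -
  have s0: "0 < s" using lt sr_nonneg[of M] by linarith
  define B where "B = (1/s) *\<^sub>R M"
  have "Spectral_Radius.spectral_radius (to_m (cmat B)) < 1"
  proof -
    obtain z where z: "z \<in> Spectral_Radius.spectrum (to_m (cmat B))"
      and zr: "Spectral_Radius.spectral_radius (to_m (cmat B)) = norm z"
      using spectral_radius_mem_max(1)[OF to_m_carrier card_pos] by auto
    from z have "z \<in> Sv (cmat B)" unfolding Sv_spectrum .
    then obtain x where x: "x \<noteq> 0" "cmat B *v x = z *s x" unfolding Sv_def by auto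
    have "cmat M *v x = (complex_of_real s * z) *s x"
    proof -
      have "cmat M = cmat (s *\<^sub>R B)" unfolding B_def using s0 by simp
      then have "cmat M *v x = complex_of_real s *s (cmat B *v x)"
        by (simp add: cmat_scaleR_mult)
      also have "\<dots> = (complex_of_real s * z) *s x" using x(2) by (simp add: vector_smult_assoc)
      finally show ?thesis .
    qed
    then have "complex_of_real s * z \<in> Sv (cmat M)" using x(1) unfolding Sv_def by auto
    then have le: "cmod (complex_of_real s * z) \<le> spectral_radius M" by (rule sr_ge)
    have e: "cmod (complex_of_real s * z) = s * cmod z" using s0 by (simp add: norm_mult)
    have "s * cmod z < s * 1" using e le lt by linarith
    then have "cmod z < 1" using s0 by (metis mult_less_cancel_left_pos)
    then show ?thesis using zr by simp
  qed
  from spectral_radius_jnf_norm_bound_less_1_upper_triangular[OF to_m_carrier this]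
  obtain C where C: "\<And>k. norm_bound (to_m (cmat B) ^\<^sub>m k) C" by auto
  have ent: "\<bar>mpow B k $ i $ j\<bar> \<le> C" for k i j
  proof -
    have "norm_bound (to_m (cmat (mpow B k))) C" using C[of k] by (simp add: cmat_mpow to_m_mpow)
    then have "cmod (cmat (mpow B k) $ idx (jdx i) $ idx (jdx j)) \<le> C"
      using jdx_lt[of i] jdx_lt[of j] unfolding norm_bound_def by (simp add: to_m_def) (metis idx_jdx)
    then show ?thesis by (simp add: cmat_def)
  qed
  define C' where "C' = real CARD('n) * real CARD('n) * C"
  have "mnorm (mpow M k) \<le> C' * s^k" for k
  proof -
    have "mpow M k = (s^k) *\<^sub>R mpow B k"
      unfolding B_def mpow_scaleR using s0 by (simp add: power_one_over)
    then have "mnorm (mpow M k) = s^k * mnorm (mpow B k)"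
      using s0 by (simp add: mnorm_scaleR)
    also have "\<dots> \<le> s^k * C'"
      using onorm_le_matrix_component[OF ent] s0 unfolding mnorm_def C'_def by (simp add: mult.assoc)
    finally show ?thesis by (simp add: mult.commute)
  qed
  then show ?thesis by blast
qed

lemma real_eig_finite: "finite {l. \<exists>x. x \<noteq> 0 \<and> (M::real^'n^'n::finite) *v x = l *\<^sub>R x}"
proof -
  let ?S = "{l. \<exists>x. x \<noteq> 0 \<and> M *v x = l *\<^sub>R x}"
  have "complex_of_real ` ?S \<subseteq> Sv (cmat M)"
  proof
    fix z assume "z \<in> complex_of_real ` ?S"
    then obtain l x where z: "z = complex_of_real l" and x: "x \<noteq> 0" "M *v x = l *\<^sub>R x" by auto
    define y where "y = (\<chi> i. complex_of_real (x$i))"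
    have "y \<noteq> 0" using x(1) unfolding y_def by (auto simp: Finite_Cartesian_Product.vec_eq_iff)
    moreover have "cmat M *v y = z *s y"
    proof -
      have "(M *v x) $ i = l * x $ i" for i using x(2) by simp
      then have "(\<Sum>j\<in>UNIV. M$i$j * x$j) = l * x$i" for i by (simp add: matrix_vector_mult_def)
      then have "(\<Sum>j\<in>UNIV. complex_of_real (M$i$j) * complex_of_real (x$j)) = complex_of_real l * complex_of_real (x$i)" for i
        by (metis (no_types, lifting) of_real_mult of_real_sum sum.cong)
      then show ?thesis unfolding cmat_def y_def z
        by (simp add: Finite_Cartesian_Product.vec_eq_iff matrix_vector_mult_def)
    qed
    ultimately show "z \<in> Sv (cmat M)" unfolding Sv_def by auto
  qed
  then have "finite (complex_of_real ` ?S)" using Sv_finite finite_subset by blast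
  then show ?thesis by (rule finite_imageD) (simp add: inj_on_def)
qed




lemma dot_transpose: "x \<bullet> (transpose A *v y) = (A *v x) \<bullet> (y::real^'n::finite)"
  by (metis dot_lmul_matrix inner_commute transpose_matrix_vector)

lemma sym_dot: "transpose M = M \<Longrightarrow> x \<bullet> (M *v y) = (M *v x) \<bullet> (y::real^'n::finite)"
  by (metis dot_transpose)

lemma qf_expand:
  "x \<bullet> ((g *\<^sub>R Qv - transpose A ** Qw ** A) *v x)
     = g * (x \<bullet> (Qv *v x)) - (A *v x) \<bullet> (Qw *v (A *v (x::real^'n::finite)))"
proof -
  have "(transpose A ** Qw ** A) *v x = transpose A *v (Qw *v (A *v x))"
    by (metis matrix_vector_mul_assoc)
  then have e: "x \<bullet> ((transpose A ** Qw ** A) *v x) = (A *v x) \<bullet> (Qw *v (A *v x))"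
    by (metis dot_transpose)
  have "x \<bullet> ((g *\<^sub>R Qv - transpose A ** Qw ** A) *v x)
     = g * (x \<bullet> (Qv *v x)) - x \<bullet> ((transpose A ** Qw ** A) *v x)"
    by (simp only: matrix_vector_mult_diff_rdistrib scaleR_matrix_vector_assoc[symmetric]
        inner_diff_right inner_scaleR_right)
  then show ?thesis using e by simp
qed

lemma qf_bound: "\<bar>x \<bullet> (M *v x)\<bar> \<le> mnorm M * (norm (x::real^'n::finite))\<^sup>2"
proof -
  have "\<bar>x \<bullet> (M *v x)\<bar> \<le> norm x * norm (M *v x)" by (rule Cauchy_Schwarz_ineq2)
  also have "\<dots> \<le> norm x * (mnorm M * norm x)" by (rule mult_left_mono[OF mnorm_bound norm_ge_zero])
  finally show ?thesis by (simp add: power2_eq_square algebra_simps)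
qed

lemma qf_add_scale: "x \<bullet> ((M + t *\<^sub>R N) *v x) = x \<bullet> (M *v x) + t * (x \<bullet> (N *v (x::real^'n::finite)))"
  by (simp add: matrix_vector_mult_add_rdistrib scaleR_matrix_vector_assoc[symmetric] inner_add_right)

lemma transpose_diff: "transpose (X - Y) = transpose X - transpose (Y::'a::ab_group_add^'n^'m)"
  by (simp add: Finite_Cartesian_Product.vec_eq_iff transpose_def)

lemma transpose_add: "transpose (X + Y) = transpose X + transpose (Y::'a::ab_group_add^'n^'m)"
  by (simp add: Finite_Cartesian_Product.vec_eq_iff transpose_def)

lemma transpose_sum: "transpose (\<Sum>k\<in>S. f k) = (\<Sum>k\<in>S. transpose (f k :: real^'n^'m))"
  by (simp add: Finite_Cartesian_Product.vec_eq_iff transpose_def sum_component)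

lemma sym_combo:
  assumes "transpose Qv = Qv" "transpose Qw = (Qw::real^'n^'n)"
  shows "symmetric_mat (g *\<^sub>R Qv - transpose A ** Qw ** A)"
  unfolding symmetric_mat_def using assms
  by (simp add: transpose_diff transpose_scalar matrix_transpose_mul transpose_transpose matrix_mul_assoc)

lemma quad_real:
  fixes p q :: real
  assumes all: "\<And>t. 0 \<le> 2*t*p + t^2*q" and q: "0 \<le> q" and p: "0 \<le> p"
  shows "p = 0"
proof (rule ccontr)
  assume "p \<noteq> 0"
  then have pp: "0 < p" using p by simp
  define t where "t = - p / (q+1)"
  have q1: "0 < q + 1" using q by simp
  have tq: "t * (q+1) = -p" unfolding t_def using q1 by simp
  have "(q+1)^2 * (2*t*p + t^2*q) = 2*p*(t*(q+1))*(q+1) + (t*(q+1))^2*q"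
    by (simp add: power2_eq_square algebra_simps)
  also have "\<dots> = - (p^2) * (q+2)" unfolding tq by (simp add: power2_eq_square algebra_simps)
  finally have "(q+1)^2 * (2*t*p + t^2*q) = - (p^2) * (q+2)" .
  moreover have "0 \<le> (q+1)^2 * (2*t*p + t^2*q)" using all[of t] by simp
  moreover have "0 < p^2 * (q+2)" using pp q by simp
  ultimately show False by linarith
qed

lemma psd_zero:
  fixes M :: "real^'n^'n::finite"
  assumes sym: "transpose M = M" and psd: "\<And>y. 0 \<le> y \<bullet> (M *v y)" and x0: "x \<bullet> (M *v x) = 0"
  shows "M *v x = 0"
proof -
  define y where "y = M *v x"
  define p where "p = y \<bullet> y"
  define q where "q = y \<bullet> (M *v y)"
  have "0 \<le> 2*t*p + t^2*q" for t
  proof -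
    have e1: "x \<bullet> (M *v y) = p" unfolding p_def y_def using sym_dot[OF sym] by simp
    have e2: "y \<bullet> (M *v x) = p" unfolding p_def y_def by simp
    have "(x + t *\<^sub>R y) \<bullet> (M *v (x + t *\<^sub>R y)) = x \<bullet> (M *v x) + t * (x \<bullet> (M *v y)) + t * (y \<bullet> (M *v x)) + t^2 * q"
      unfolding q_def by (simp add: matrix_vector_right_distrib matrix_vector_mult_scaleR inner_add_left inner_add_right power2_eq_square algebra_simps)
    then have "(x + t *\<^sub>R y) \<bullet> (M *v (x + t *\<^sub>R y)) = 2*t*p + t^2*q" using e1 e2 x0 by simp
    then show ?thesis using psd[of "x + t *\<^sub>R y"] by simp
  qed
  moreover have "0 \<le> q" unfolding q_def by (rule psd)
  moreover have "0 \<le> p" unfolding p_def by simp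
  ultimately have "p = 0" by (rule quad_real)
  then show ?thesis unfolding p_def y_def by simp
qed

lemma exists_unit: "\<exists>u::real^'n::finite. norm u = 1"
  using vector_choose_size[of 1] by (metis zero_le_one)

lemma pd_lower:
  fixes M :: "real^'n^'n::finite"
  assumes pd: "\<And>x. x \<noteq> 0 \<Longrightarrow> 0 < x \<bullet> (M *v x)"
  shows "\<exists>c>0. \<forall>x. c * (norm x)\<^sup>2 \<le> x \<bullet> (M *v x)"
proof -
  have cont: "continuous_on (sphere 0 1) (\<lambda>x::real^'n. x \<bullet> (M *v x))"
  proof -
    have "continuous_on UNIV (\<lambda>x::real^'n. M *v x)"
      by (rule linear_continuous_on[OF matrix_vector_mul_bounded_linear])
    then have "continuous_on (sphere 0 1) (\<lambda>x::real^'n. M *v x)"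
      by (rule continuous_on_subset) simp
    then show ?thesis by (intro continuous_on_inner continuous_on_id)
  qed
  have ne: "sphere (0::real^'n) 1 \<noteq> {}" using exists_unit[where 'n='n] by auto
  obtain u where u: "u \<in> sphere 0 1" and umin: "\<And>y. y \<in> sphere 0 1 \<Longrightarrow> u \<bullet> (M *v u) \<le> y \<bullet> (M *v y)"
    using continuous_attains_inf[OF compact_sphere ne cont] by blast
  define c where "c = u \<bullet> (M *v u)"
  have "u \<noteq> 0" using u by auto
  then have c0: "0 < c" unfolding c_def by (rule pd)
  have "c * (norm x)\<^sup>2 \<le> x \<bullet> (M *v x)" for x
  proof (cases "x = 0")
    case True then show ?thesis by simp
  next
    case False
    define y where "y = (1 / norm x) *\<^sub>R x"
    have ys: "y \<in> sphere 0 1" unfolding y_def using False by simp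
    have xy: "x = norm x *\<^sub>R y" unfolding y_def using False by simp
    have "x \<bullet> (M *v x) = (norm x)\<^sup>2 * (y \<bullet> (M *v y))"
      by (subst (1 2) xy) (simp add: matrix_vector_mult_scaleR power2_eq_square)
    moreover have "c \<le> y \<bullet> (M *v y)" unfolding c_def by (rule umin[OF ys])
    moreover have "c * (norm x)\<^sup>2 \<le> (y \<bullet> (M *v y)) * (norm x)\<^sup>2"
      by (rule mult_right_mono) (use \<open>c \<le> y \<bullet> (M *v y)\<close> in auto)
    ultimately show ?thesis by (metis mult.commute)
  qed
  then show ?thesis using c0 by blast
qed

lemma lambda_min_zero:
  fixes M :: "real^'n^'n::finite"
  assumes psd: "pos_semidef M" and npd: "\<not> (\<forall>x. x \<noteq> 0 \<longrightarrow> 0 < x \<bullet> (M *v x))"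
  shows "lambda_min M = 0"
proof -
  have sym: "transpose M = M" and ps: "\<And>y. 0 \<le> y \<bullet> (M *v y)"
    using psd unfolding pos_semidef_def symmetric_mat_def by auto
  obtain x where x0: "x \<noteq> 0" and xle: "x \<bullet> (M *v x) \<le> 0" using npd by auto
  have "x \<bullet> (M *v x) = 0" using xle ps[of x] by simp
  then have "M *v x = 0" by (rule psd_zero[OF sym ps])
  then have mem: "0 \<in> {l. \<exists>x. x \<noteq> 0 \<and> M *v x = l *\<^sub>R x}" using x0 by auto
  have ge: "0 \<le> l" if lmem: "l \<in> {l. \<exists>x. x \<noteq> 0 \<and> M *v x = l *\<^sub>R x}" for l
  proof -
    obtain y where y: "y \<noteq> 0" "M *v y = l *\<^sub>R y" using lmem by auto
    have "0 \<le> y \<bullet> (M *v y)" by (rule ps)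
    also have "y \<bullet> (M *v y) = l * (y \<bullet> y)" using y(2) by simp
    finally have "0 \<le> l * (y \<bullet> y)" .
    moreover have "0 < y \<bullet> y" using y(1) by simp
    ultimately show ?thesis by (simp add: zero_le_mult_iff)
  qed
  show ?thesis unfolding lambda_min_def
    by (rule Min_eqI[OF real_eig_finite]) (use mem ge in auto)
qed

lemma finite_uniform_pos:
  assumes "finite S" "\<And>s. s \<in> S \<Longrightarrow> \<exists>c>0. P s c"
    and mono: "\<And>s c c'. P s c \<Longrightarrow> 0 < c' \<Longrightarrow> c' \<le> c \<Longrightarrow> P s c'"
  shows "\<exists>c>(0::real). \<forall>s\<in>S. P s c"
  using assms(1,2)
proof (induction S rule: finite_induct)
  case empty then show ?case by (intro exI[of _ 1]) auto
next
  case (insert a S)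
  obtain c1 where c1: "c1>0" "\<forall>s\<in>S. P s c1" using insert by auto
  obtain c2 where c2: "c2 > 0" "P a c2" using insert by auto
  have "\<forall>s\<in>insert a S. P s (min c1 c2)"
    using c1 c2 mono by (metis insert_iff min.cobounded1 min.cobounded2 min_def)
  then show ?case using c1 c2 by (intro exI[of _ "min c1 c2"]) auto
qed




lemma foldl_lp: "foldl (\<lambda>M s. A s ** M) (M ** N) ss = foldl (\<lambda>M s. A s ** M) M ss ** N"
  by (induction ss arbitrary: M) (simp_all add: matrix_mul_assoc)

lemma label_prod_Nil: "label_prod A [] = mat 1"
  unfolding label_prod_def by simp

lemma label_prod_Cons: "label_prod A (s # ss) = label_prod A ss ** A s"
  unfolding label_prod_def using foldl_lp[of A "mat 1" "A s" ss]
  by (simp add: matrix_mul_rid matrix_mul_lid)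

lemma label_prod_append: "label_prod A (xs @ ys) = label_prod A ys ** label_prod A xs"
  unfolding label_prod_def using foldl_lp[of A "mat 1" "foldl (\<lambda>M s. A s ** M) (mat 1) xs" ys]
  by (simp add: matrix_mul_lid)

lemma label_prod_single: "label_prod A [s] = A s"
  by (simp add: label_prod_Cons label_prod_Nil matrix_mul_lid)

lemma is_path_snoc: "is_path E (p @ [e]) \<longleftrightarrow> is_path E p \<and> e \<in> E \<and> (p \<noteq> [] \<longrightarrow> etgt (last p) = esrc e)"
  unfolding is_path_def by (auto simp: successively_append_iff)

lemma path_bound:
  assumes edge: "\<And>e x. e \<in> E \<Longrightarrow> (A (elab e) *v x) \<bullet> (Q (etgt e) *v (A (elab e) *v x)) \<le> g^2 * (x \<bullet> (Q (esrc e) *v x))"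
  shows "is_path E p \<Longrightarrow> p \<noteq> [] \<Longrightarrow> (path_prod A p *v x) \<bullet> (Q (etgt (last p)) *v (path_prod A p *v x))
           \<le> g^(2*length p) * (x \<bullet> (Q (esrc (hd p)) *v (x::real^'n::finite)))"
proof (induction p rule: rev_induct)
  case Nil then show ?case by simp
next
  case (snoc e p)
  have pe: "is_path E p" "e \<in> E" "p \<noteq> [] \<longrightarrow> etgt (last p) = esrc e"
    using snoc.prems(1) is_path_snoc by blast+
  have pp: "path_prod A (p @ [e]) = A (elab e) ** path_prod A p"
    unfolding path_prod_def by (simp add: label_prod_append label_prod_single)
  show ?case
  proof (cases "p = []")
    case True
    then show ?thesis using edge[OF pe(2), of x]
      by (simp add: pp path_prod_def label_prod_Nil label_prod_single matrix_mul_rid)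
  next
    case False
    let ?y = "path_prod A p *v x"
    have IH: "?y \<bullet> (Q (etgt (last p)) *v ?y) \<le> g^(2*length p) * (x \<bullet> (Q (esrc (hd p)) *v x))"
      using snoc.IH pe(1) False by blast
    have py: "path_prod A (p@[e]) *v x = A (elab e) *v ?y" by (simp add: pp matrix_vector_mul_assoc)
    have "(A (elab e) *v ?y) \<bullet> (Q (etgt e) *v (A (elab e) *v ?y)) \<le> g^2 * (?y \<bullet> (Q (esrc e) *v ?y))"
      by (rule edge[OF pe(2)])
    also have "\<dots> = g^2 * (?y \<bullet> (Q (etgt (last p)) *v ?y))" using pe(3) False by simp
    also have "\<dots> \<le> g^2 * (g^(2*length p) * (x \<bullet> (Q (esrc (hd p)) *v x)))"
      by (rule mult_left_mono[OF IH]) simp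
    also have "\<dots> = g^(2*length (p@[e])) * (x \<bullet> (Q (esrc (hd (p@[e]))) *v x))"
      using False by (simp add: power2_eq_square mult.assoc)
    finally show ?thesis using py by simp
  qed
qed

definition ed :: "'e list \<Rightarrow> nat \<Rightarrow> 'e" where "ed c j = c ! (j mod length c)"

lemma ed_in: "c \<noteq> [] \<Longrightarrow> ed c j \<in> set c"
  unfolding ed_def by simp

lemma ed_succ:
  assumes cyc: "is_cycle E c"
  shows "etgt (ed c j) = esrc (ed c (Suc j))"
proof -
  have c0: "c \<noteq> []" and pth: "is_path E c" and cl: "esrc (hd c) = etgt (last c)"
    using cyc unfolding is_cycle_def by auto
  define T where "T = length c"
  have T0: "0 < T" using c0 unfolding T_def by simp
  define r where "r = j mod T"
  have rT: "r < T" unfolding r_def using T0 by simp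
  show ?thesis
  proof (cases "Suc r < T")
    case True
    have "Suc j mod T = Suc r" unfolding r_def using True by (simp add: mod_Suc r_def)
    moreover have "etgt (c ! r) = esrc (c ! Suc r)"
      using successively_nth[of _ c r] pth True unfolding is_path_def T_def by blast
    ultimately show ?thesis unfolding ed_def T_def[symmetric] r_def by simp
  next
    case False
    then have rr: "Suc r = T" using rT by simp
    have "Suc j mod T = 0" unfolding r_def using rr by (simp add: mod_Suc r_def)
    moreover have "c ! r = last c"
    proof -
      have "r = length c - 1" using rr unfolding T_def by simp
      then show ?thesis using c0 by (simp add: last_conv_nth)
    qed
    moreover have "c ! 0 = hd c" using c0 by (simp add: hd_conv_nth)
    ultimately show ?thesis unfolding ed_def T_def[symmetric] r_def using cl by simp
  qed
qed

definition Bp :: "('s \<Rightarrow> real^'n^'n) \<Rightarrow> ('v,'s) edge list \<Rightarrow> nat \<Rightarrow> nat \<Rightarrow> real^'n^'n" where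
  "Bp A c i k = label_prod A (map (\<lambda>j. elab (ed c (i+j))) [0..<k])"

lemma map_upt_shift: "map f [k..<k+l] = map (\<lambda>j. f (k+j)) [0..<l]"
  by (induction l) auto

lemma Bp_split: "Bp A c i (k + l) = Bp A c (i+k) l ** Bp A c i k"
proof -
  have "[0..<k+l] = [0..<k] @ [k..<k+l]" by (rule upt_add_eq_append) simp
  then have "map (\<lambda>j. elab (ed c (i+j))) [0..<k+l]
      = map (\<lambda>j. elab (ed c (i+j))) [0..<k] @ map (\<lambda>j. elab (ed c (i+k+j))) [0..<l]"
    by (simp add: map_upt_shift add.assoc)
  then show ?thesis unfolding Bp_def by (simp add: label_prod_append)
qed

lemma Bp_zero: "Bp A c i 0 = mat 1"
  unfolding Bp_def by (simp add: label_prod_Nil)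

lemma Bp_one: "Bp A c i (Suc 0) = A (elab (ed c i))"
  unfolding Bp_def by (simp add: label_prod_single)

lemma Bp_Suc: "Bp A c i (Suc k) = Bp A c (Suc i) k ** A (elab (ed c i))"
  using Bp_split[of A c i "Suc 0" k] by (simp add: Bp_one)

lemma Bp_mod: "Bp A c i k = Bp A c (i mod length c) k"
proof -
  have "ed c (i + j) = ed c (i mod length c + j)" for j
    unfolding ed_def by (simp add: mod_add_left_eq)
  then show ?thesis unfolding Bp_def by simp
qed

lemma Bp_T: "Bp A c 0 (length c) = path_prod A c"
proof -
  have "map (\<lambda>j. elab (ed c j)) [0..<length c] = map elab c"
    by (rule nth_equalityI) (auto simp: ed_def)
  then show ?thesis unfolding Bp_def path_prod_def by simp
qed

lemma Bp_pow: "Bp A c 0 (q * length c) = mpow (path_prod A c) q"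
proof (induction q)
  case 0 then show ?case by (simp add: Bp_zero)
next
  case (Suc q)
  have "Bp A c 0 (Suc q * length c) = Bp A c (q * length c) (length c) ** Bp A c 0 (q * length c)"
    using Bp_split[of A c 0 "q * length c" "length c"] by (simp add: add.commute)
  also have "Bp A c (q * length c) (length c) = Bp A c 0 (length c)"
    by (subst Bp_mod) simp
  finally show ?case using Suc by (simp add: Bp_T)
qed

lemma Bp_path:
  assumes cyc: "is_cycle E c"
  shows "is_path E (map (\<lambda>j. ed c (i+j)) [0..<k])"
proof -
  have c0: "c \<noteq> []" and pth: "is_path E c" using cyc unfolding is_cycle_def by auto
  have sub: "set c \<subseteq> E" using pth unfolding is_path_def by auto
  show ?thesis unfolding is_path_def
  proof
    show "set (map (\<lambda>j. ed c (i+j)) [0..<k]) \<subseteq> E" using ed_in[OF c0] sub by auto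
    show "successively (\<lambda>e e'. etgt e = esrc e') (map (\<lambda>j. ed c (i+j)) [0..<k])"
      unfolding successively_conv_nth using ed_succ[OF cyc] by simp
  qed
qed

lemma Bp_is_path_prod: "Bp A c i k = path_prod A (map (\<lambda>j. ed c (i+j)) [0..<k])"
  unfolding Bp_def path_prod_def by (simp add: comp_def)




lemma pow_powr_inv: "0 \<le> (g::real) \<Longrightarrow> 0 < t \<Longrightarrow> (g^t) powr (1 / real t) = g"
proof (cases "g = 0")
  case True
  assume "0 < t" then show ?thesis using True by simp
next
  case False
  assume "0 \<le> g" "0 < t"
  then have "0 < g" using False by simp
  then show ?thesis using \<open>0 < t\<close> by (simp add: powr_realpow[symmetric] powr_powr)
qed

lemma sum_mvec: "(\<Sum>k\<in>S. F k) *v x = (\<Sum>k\<in>S. F k *v (x::real^'n::finite))"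
  by (induction S rule: infinite_finite_induct) (simp_all add: matrix_vector_mult_add_rdistrib)

lemma qf_gram: "x \<bullet> ((transpose B ** B) *v x) = (norm (B *v (x::real^'n::finite)))\<^sup>2"
proof -
  have "(transpose B ** B) *v x = transpose B *v (B *v x)" by (metis matrix_vector_mul_assoc)
  then show ?thesis unfolding power2_norm_eq_inner by (metis dot_transpose)
qed

locale cs =
  fixes V :: "'v set" and E :: "('v,'s) edge set"
    and A :: "'s \<Rightarrow> real^'n^'n" and Q :: "'v \<Rightarrow> real^'n^'n" and c :: "('v,'s) edge list"
  assumes aut: "automaton V E"
    and attained: "quad_feasible V E A (gamma_star V E A) Q"
    and cyc: "simple_cycle E c"

context cs
begin

abbreviation "gs \<equiv> gamma_star V E A"

lemma finV: "finite V" and finE: "finite E"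
  using aut unfolding automaton_def by auto

lemma endpoints: "e \<in> E \<Longrightarrow> esrc e \<in> V \<and> etgt e \<in> V"
  using aut unfolding automaton_def by auto

lemma pdQ: "v \<in> V \<Longrightarrow> pos_def (Q v)"
  using attained unfolding quad_feasible_def by auto

lemma symQ: "v \<in> V \<Longrightarrow> transpose (Q v) = Q v"
  using pdQ unfolding pos_def_def symmetric_mat_def by auto

lemma psdE: "e \<in> E \<Longrightarrow> pos_semidef (gs\<^sup>2 *\<^sub>R Q (esrc e) - transpose (A (elab e)) ** Q (etgt e) ** A (elab e))"
  using attained unfolding quad_feasible_def by auto

lemma cyc_facts: "is_cycle E c" "c \<noteq> []" "set c \<subseteq> E" "distinct (map esrc c)"
  using cyc unfolding simple_cycle_def is_cycle_def is_path_def by auto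

lemma qf_neg: "quad_feasible V E A (-g) Q' = quad_feasible V E A g Q'"
  unfolding quad_feasible_def by simp

lemma Gam_bdd: "bdd_below {g. 0 \<le> g \<and> (\<exists>Q. quad_feasible V E A g Q)}"
  by (rule bdd_belowI[of _ 0]) auto

lemma gs_le: "0 \<le> g \<Longrightarrow> quad_feasible V E A g Q' \<Longrightarrow> gs \<le> g"
  unfolding gamma_star_def by (rule cInf_lower[OF _ Gam_bdd]) auto

lemma gs_nonneg: "0 \<le> gs"
proof (rule ccontr)
  assume "\<not> 0 \<le> gs"
  then have neg: "gs < 0" by simp
  have "quad_feasible V E A (- gs) Q" using attained qf_neg by simp
  then have "gs \<le> - gs" using neg by (intro gs_le) auto
  moreover have "0 \<le> gs"
    unfolding gamma_star_def
  proof (rule cInf_greatest)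
    have "- gs \<in> {g. 0 \<le> g \<and> (\<exists>Q. quad_feasible V E A g Q)}"
      using \<open>quad_feasible V E A (- gs) Q\<close> neg by auto
    then show "{g. 0 \<le> g \<and> (\<exists>Q. quad_feasible V E A g Q)} \<noteq> {}" by blast
  qed auto
  ultimately show False using neg by simp
qed

lemma edge_ineq: "e \<in> E \<Longrightarrow> (A (elab e) *v x) \<bullet> (Q (etgt e) *v (A (elab e) *v x)) \<le> gs\<^sup>2 * (x \<bullet> (Q (esrc e) *v x))"
  using psdE[of e] qf_expand[of x "gs\<^sup>2" "Q (esrc e)" "A (elab e)" "Q (etgt e)"]
  unfolding pos_semidef_def by (metis diff_ge_0_iff_ge)

lemma kappa: "\<exists>k>0. \<forall>v\<in>V. \<forall>x. k * (norm x)\<^sup>2 \<le> x \<bullet> (Q v *v x) \<and> k * (x \<bullet> (Q v *v x)) \<le> (norm x)\<^sup>2"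
proof (rule finite_uniform_pos[OF finV])
  fix v assume v: "v \<in> V"
  obtain c1 where c1: "c1 > 0" "\<And>x. c1 * (norm x)\<^sup>2 \<le> x \<bullet> (Q v *v x)"
    using pd_lower[of "Q v"] pdQ[OF v] unfolding pos_def_def by blast
  define c2 where "c2 = 1 / (mnorm (Q v) + 1)"
  have c2: "c2 > 0" unfolding c2_def using mnorm_nonneg[of "Q v"] by simp
  have up: "c2 * (x \<bullet> (Q v *v x)) \<le> (norm x)\<^sup>2" for x
  proof -
    have "x \<bullet> (Q v *v x) \<le> mnorm (Q v) * (norm x)\<^sup>2" using qf_bound[of x "Q v"] by simp
    also have "\<dots> \<le> (mnorm (Q v) + 1) * (norm x)\<^sup>2" by (simp add: mult_right_mono)
    finally have h1: "x \<bullet> (Q v *v x) \<le> (mnorm (Q v) + 1) * (norm x)\<^sup>2" .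
    have "c2 * (x \<bullet> (Q v *v x)) \<le> c2 * ((mnorm (Q v) + 1) * (norm x)\<^sup>2)"
      using h1 c2 by (simp add: mult_left_mono)
    also have "c2 * ((mnorm (Q v) + 1) * (norm x)\<^sup>2) = (norm x)\<^sup>2"
      unfolding c2_def using mnorm_nonneg[of "Q v"] by simp
    finally show ?thesis .
  qed
  show "\<exists>k>0. \<forall>x. k * (norm x)\<^sup>2 \<le> x \<bullet> (Q v *v x) \<and> k * (x \<bullet> (Q v *v x)) \<le> (norm x)\<^sup>2"
  proof (intro exI[of _ "min c1 c2"] conjI allI)
    show "0 < min c1 c2" using c1 c2 by simp
    fix x
    have nn: "0 \<le> x \<bullet> (Q v *v x)" using c1(2)[of x] c1(1) by (metis dual_order.trans less_eq_real_def mult_nonneg_nonneg zero_le_power2)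
    show "min c1 c2 * (norm x)\<^sup>2 \<le> x \<bullet> (Q v *v x)"
      using c1(2)[of x] mult_right_mono[of "min c1 c2" c1 "(norm x)\<^sup>2"] by simp
    show "min c1 c2 * (x \<bullet> (Q v *v x)) \<le> (norm x)\<^sup>2"
      using up[of x] mult_right_mono[of "min c1 c2" c2 "x \<bullet> (Q v *v x)"] nn by simp
  qed
next
  fix v k k'
  assume h: "\<forall>x. k * (norm x)\<^sup>2 \<le> x \<bullet> (Q v *v x) \<and> k * (x \<bullet> (Q v *v x)) \<le> (norm x)\<^sup>2"
    and k': "0 < k'" "k' \<le> k"
  show "\<forall>x. k' * (norm x)\<^sup>2 \<le> x \<bullet> (Q v *v x) \<and> k' * (x \<bullet> (Q v *v x)) \<le> (norm x)\<^sup>2"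
  proof
    fix x
    have a: "k * (norm x)\<^sup>2 \<le> x \<bullet> (Q v *v x)" and b: "k * (x \<bullet> (Q v *v x)) \<le> (norm x)\<^sup>2" using h by auto
    have nn: "0 \<le> x \<bullet> (Q v *v x)" using a k' by (metis dual_order.trans less_eq_real_def mult_nonneg_nonneg zero_le_power2)
    have m1: "k' * (norm x)\<^sup>2 \<le> k * (norm x)\<^sup>2" by (rule mult_right_mono) (use k' in auto)
    have m2: "k' * (x \<bullet> (Q v *v x)) \<le> k * (x \<bullet> (Q v *v x))" by (rule mult_right_mono) (use k' nn in auto)
    show "k' * (norm x)\<^sup>2 \<le> x \<bullet> (Q v *v x) \<and> k' * (x \<bullet> (Q v *v x)) \<le> (norm x)\<^sup>2"
      using a b m1 m2 by linarith
  qed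
qed

lemma path_norm: "\<exists>K>0. \<forall>p. is_path E p \<longrightarrow> p \<noteq> [] \<longrightarrow> mnorm (path_prod A p) \<le> K * gs ^ length p"
proof -
  obtain k where k0: "k > 0" and kb: "\<forall>v\<in>V. \<forall>x. k * (norm x)\<^sup>2 \<le> x \<bullet> (Q v *v x) \<and> k * (x \<bullet> (Q v *v x)) \<le> (norm x)\<^sup>2"
    using kappa by blast
  have "mnorm (path_prod A p) \<le> (1/k) * gs ^ length p" if p: "is_path E p" "p \<noteq> []" for p
  proof (rule mnorm_le)
    fix x
    let ?y = "path_prod A p *v x"
    have hdE: "hd p \<in> E" and lastE: "last p \<in> E" using p unfolding is_path_def by auto
    have sV: "esrc (hd p) \<in> V" and tV: "etgt (last p) \<in> V" using endpoints hdE lastE by auto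
    have pb: "?y \<bullet> (Q (etgt (last p)) *v ?y) \<le> gs^(2*length p) * (x \<bullet> (Q (esrc (hd p)) *v x))"
      by (rule path_bound[OF edge_ineq p]) 
    have "(norm ?y)\<^sup>2 \<le> (1/k) * (?y \<bullet> (Q (etgt (last p)) *v ?y))"
      using kb tV k0 by (simp add: field_simps)
    also have "\<dots> \<le> (1/k) * (gs^(2*length p) * (x \<bullet> (Q (esrc (hd p)) *v x)))"
      using pb k0 by (simp add: divide_right_mono)
    also have "\<dots> \<le> (1/k) * (gs^(2*length p) * ((1/k) * (norm x)\<^sup>2))"
      using kb sV k0 gs_nonneg by (intro mult_left_mono) (auto simp: field_simps)
    also have "\<dots> = ((1/k) * gs ^ length p * norm x)\<^sup>2"
      by (simp add: power_mult_distrib power_mult power2_eq_square)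
    finally have "(norm ?y)\<^sup>2 \<le> ((1/k) * gs ^ length p * norm x)\<^sup>2" .
    then show "norm ?y \<le> (1/k) * gs ^ length p * norm x"
      by (rule power2_le_imp_le) (use k0 gs_nonneg in simp)
  qed
  then have "\<forall>p. is_path E p \<longrightarrow> p \<noteq> [] \<longrightarrow> mnorm (path_prod A p) \<le> (1/k) * gs ^ length p" by blast
  moreover have "1/k > 0" using k0 by simp
  ultimately show ?thesis by blast
qed

end




context cs
begin

lemma T_pos: "0 < length c" using cyc_facts(2) by simp

lemma M1_bound: "\<exists>M1>0. \<forall>i l. l \<le> length c \<longrightarrow> mnorm (Bp A c i l) \<le> M1"
proof -
  define T where "T = length c"
  define M1 where "M1 = (\<Sum>i<T. \<Sum>l\<le>T. mnorm (Bp A c i l)) + 1"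
  have "mnorm (Bp A c i l) \<le> M1" if l: "l \<le> T" for i l
  proof -
    have im: "i mod T < T" using T_pos T_def by simp
    have "mnorm (Bp A c i l) = mnorm (Bp A c (i mod T) l)" using Bp_mod[of A c i l] T_def by simp
    also have "\<dots> \<le> (\<Sum>l'\<le>T. mnorm (Bp A c (i mod T) l'))"
      by (rule member_le_sum) (use l mnorm_nonneg in auto)
    also have "\<dots> \<le> (\<Sum>i'<T. \<Sum>l'\<le>T. mnorm (Bp A c i' l'))"
      by (rule member_le_sum[of "i mod T" "{..<T}" "\<lambda>i'. \<Sum>l'\<le>T. mnorm (Bp A c i' l')"])
         (use im mnorm_nonneg in \<open>auto intro: sum_nonneg\<close>)
    finally show ?thesis unfolding M1_def by simp
  qed
  moreover have "M1 > 0" unfolding M1_def by (simp add: add_nonneg_pos sum_nonneg mnorm_nonneg)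
  ultimately show ?thesis unfolding T_def by blast
qed

lemma mpow_path_bound:
  obtains K where "K > 0" "\<And>q. 0 < q \<Longrightarrow> mnorm (mpow (path_prod A c) q) \<le> K * (gs ^ length c) ^ q"
proof -
  obtain K where K: "K > 0" "\<forall>p. is_path E p \<longrightarrow> p \<noteq> [] \<longrightarrow> mnorm (path_prod A p) \<le> K * gs ^ length p"
    using path_norm by blast
  have "mnorm (mpow (path_prod A c) q) \<le> K * (gs ^ length c) ^ q" if q: "0 < q" for q
  proof -
    let ?p = "map (\<lambda>j. ed c (0+j)) [0..<q * length c]"
    have "mpow (path_prod A c) q = path_prod A ?p"
      using Bp_pow[of A c q] Bp_is_path_prod[of A c 0 "q * length c"] by simp
    moreover have "is_path E ?p" by (rule Bp_path[OF cyc_facts(1)])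
    moreover have "?p \<noteq> []" using q T_pos by simp
    ultimately have "mnorm (mpow (path_prod A c) q) \<le> K * gs ^ length ?p" using K(2) by metis
    also have "\<dots> = K * (gs ^ length c) ^ q"
    proof -
      have "gs ^ (q * length c) = (gs ^ length c) ^ q" by (metis power_mult mult.commute)
      then show ?thesis by simp
    qed
    finally show ?thesis .
  qed
  then show ?thesis using that K(1) by blast
qed

lemma rho_le: "spectral_radius (path_prod A c) \<le> gs ^ length c"
proof (rule ccontr)
  define G where "G = gs ^ length c"
  define r where "r = spectral_radius (path_prod A c)"
  assume "\<not> spectral_radius (path_prod A c) \<le> gs ^ length c"
  then have gt: "G < r" unfolding G_def r_def by simp
  obtain K where K: "K > 0" "\<And>q. 0 < q \<Longrightarrow> mnorm (mpow (path_prod A c) q) \<le> K * G ^ q"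
    using mpow_path_bound unfolding G_def by blast
  have low: "r ^ q \<le> K * G ^ q" if "0 < q" for q
    using sr_gelfand[of "path_prod A c" q] K(2)[OF that] unfolding r_def by simp
  have G0: "0 \<le> G" unfolding G_def using gs_nonneg by simp
  show False
  proof (cases "G = 0")
    case True
    then have "r \<le> 0" using low[of 1] by simp
    then show False using gt True by simp
  next
    case False
    then have Gp: "0 < G" using G0 by simp
    define x where "x = r / G"
    have x1: "1 < x" unfolding x_def using gt Gp by simp
    obtain n where n: "K < x ^ n" using real_arch_pow[OF x1] by blast
    have "x ^ n \<le> x ^ Suc n" using x1 by simp
    then have "K < x ^ Suc n" using n by simp
    then have "K * G ^ Suc n < x ^ Suc n * G ^ Suc n" using Gp by simp
    also have "x ^ Suc n * G ^ Suc n = r ^ Suc n"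
      unfolding x_def using Gp by (simp add: power_divide)
    finally show False using low[of "Suc n"] by simp
  qed
qed

end




lemma transpose_zero': "transpose (0::real^'n^'m) = 0"
  by (simp add: Finite_Cartesian_Product.vec_eq_iff transpose_def)

context cs
begin

lemma rho_ge:
  assumes Eprime: "{e \<in> E. lambda_min ((gamma_star V E A)\<^sup>2 *\<^sub>R Q (esrc e)
                   - transpose (A (elab e)) ** Q (etgt e) ** A (elab e)) = 0} = set c"
  shows "gs ^ length c \<le> spectral_radius (path_prod A c)"
proof (rule ccontr)
  define T where "T = length c"
  define Ac where "Ac = path_prod A c"
  define \<rho> where "\<rho> = spectral_radius Ac"
  assume "\<not> gs ^ length c \<le> spectral_radius (path_prod A c)"
  then have lt: "\<rho> < gs^T" unfolding \<rho>_def Ac_def T_def by simp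
  have T0: "0 < T" using T_pos T_def by simp
  have \<rho>0: "0 \<le> \<rho>" unfolding \<rho>_def by (rule sr_nonneg)
  define G where "G = gs^T"
  have G0: "0 < G" using lt \<rho>0 G_def by simp
  have g0: "0 < gs"
  proof (rule ccontr)
    assume "\<not> 0 < gs"
    then have "gs = 0" using gs_nonneg by simp
    then show False using G0 T0 unfolding G_def by (simp add: zero_power)
  qed
  define s where "s = (\<rho> + G) / 2"
  have s: "\<rho> < s" "s < G" "0 < s" using lt \<rho>0 G0 unfolding s_def G_def by auto
  obtain C where C: "\<And>k. mnorm (mpow Ac k) \<le> C * s^k"
    using pow_bound[of Ac s] s(1) unfolding \<rho>_def by blast
  obtain M1 where M1: "M1 > 0" "\<And>i l. l \<le> T \<Longrightarrow> mnorm (Bp A c i l) \<le> M1"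
    using M1_bound unfolding T_def by blast
  define x where "x = s / G"
  have x: "0 \<le> x" "x < 1" unfolding x_def using s G0 by auto
  define R where "R = G / (2 * M1^2 * (\<bar>C\<bar> + 1))"
  have R0: "0 < R" unfolding R_def using G0 M1(1) by (simp add: add_pos_nonneg)
  obtain n where n: "x^n < R" using real_arch_pow_inv[OF R0 x(2)] by blast
  define K where "K = Suc n * T"
  have K0: "0 < K" unfolding K_def using T0 by simp
  have Bdec: "Bp A c i K = Bp A c 0 i ** mpow Ac n ** Bp A c i (T - i)" if i: "i < T" for i
  proof -
    have KK: "K = (T - i) + (n * T + i)" unfolding K_def using i by simp
    have "Bp A c i K = Bp A c (i + (T - i)) (n * T + i) ** Bp A c i (T - i)"
      unfolding KK by (rule Bp_split)
    also have "Bp A c (i + (T - i)) (n * T + i) = Bp A c 0 (n * T + i)"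
      using Bp_mod[of A c "i + (T - i)" "n * T + i"] i unfolding T_def by simp
    also have "Bp A c 0 (n * T + i) = Bp A c (n * T) i ** Bp A c 0 (n * T)"
      using Bp_split[of A c 0 "n * T" i] by simp
    also have "Bp A c (n * T) i = Bp A c 0 i"
      using Bp_mod[of A c "n * T" i] unfolding T_def by simp
    also have "Bp A c 0 (n * T) = mpow Ac n"
      unfolding T_def Ac_def by (rule Bp_pow)
    finally show ?thesis .
  qed
  have GK: "G ^ Suc n = gs ^ K" unfolding G_def K_def by (metis power_mult mult.commute)
  have Bsmall: "mnorm (Bp A c i K) \<le> gs^K / 2" for i
  proof -
    define i' where "i' = i mod T"
    have i': "i' < T" unfolding i'_def using T0 by simp
    have "Bp A c i K = Bp A c i' K" unfolding i'_def T_def by (rule Bp_mod)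
    also have "\<dots> = Bp A c 0 i' ** mpow Ac n ** Bp A c i' (T - i')" by (rule Bdec[OF i'])
    finally have eq: "Bp A c i K = Bp A c 0 i' ** mpow Ac n ** Bp A c i' (T - i')" .
    have a1: "mnorm (Bp A c 0 i') \<le> M1" using M1(2) i' by simp
    have a3: "mnorm (Bp A c i' (T - i')) \<le> M1" using M1(2) by simp
    have a2: "mnorm (mpow Ac n) \<le> (\<bar>C\<bar> + 1) * s^n"
    proof -
      have "C * s^n \<le> (\<bar>C\<bar> + 1) * s^n" using s(3) by (intro mult_right_mono) auto
      then show ?thesis using C[of n] by simp
    qed
    have "mnorm (Bp A c i K) \<le> mnorm (Bp A c 0 i' ** mpow Ac n) * mnorm (Bp A c i' (T - i'))"
      unfolding eq by (rule mnorm_mult)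
    also have "\<dots> \<le> (mnorm (Bp A c 0 i') * mnorm (mpow Ac n)) * mnorm (Bp A c i' (T - i'))"
      by (rule mult_right_mono[OF mnorm_mult mnorm_nonneg])
    also have "\<dots> \<le> (M1 * ((\<bar>C\<bar> + 1) * s^n)) * M1"
      by (intro mult_mono a1 a2 a3 mnorm_nonneg mult_nonneg_nonneg) (use M1(1) s(3) in auto)
    also have "\<dots> = M1^2 * (\<bar>C\<bar> + 1) * x^n * G^n"
      unfolding x_def using G0 by (simp add: power_divide power2_eq_square)
    also have "\<dots> \<le> M1^2 * (\<bar>C\<bar> + 1) * R * G^n"
      using n G0 M1(1) by (intro mult_right_mono mult_left_mono) auto
    also have "\<dots> = G ^ Suc n / 2"
    proof -
      define Z where "Z = M1^2 * (\<bar>C\<bar> + 1)"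
      have c1: "0 < \<bar>C\<bar> + 1" using abs_ge_zero[of C] by linarith
      have Z0: "Z \<noteq> 0" using M1(1) c1 unfolding Z_def by simp
      have "M1^2 * (\<bar>C\<bar> + 1) * R * G^n = Z * (G / (2*Z)) * G^n" unfolding R_def Z_def by simp
      also have "\<dots> = G ^ Suc n / 2" using Z0 by (simp add: field_simps)
      finally show ?thesis .
    qed
    finally show ?thesis unfolding GK .
  qed
  define Pm where "Pm i = (\<Sum>k<K. (1 / gs^(2*k)) *\<^sub>R (transpose (Bp A c i k) ** Bp A c i k))" for i
  have Pm_qf: "y \<bullet> (Pm i *v y) = (\<Sum>k<K. (norm (Bp A c i k *v y))\<^sup>2 / gs^(2*k))" for i y
    unfolding Pm_def by (simp add: sum_mvec inner_sum_right scaleR_matrix_vector_assoc[symmetric] qf_gram)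
  have Pm_sym: "transpose (Pm i) = Pm i" for i
    unfolding Pm_def by (simp add: transpose_sum transpose_scalar matrix_transpose_mul transpose_transpose)
  have Pm_nn: "0 \<le> y \<bullet> (Pm i *v y)" for i y
    unfolding Pm_qf by (intro sum_nonneg) simp
  have Pm_mod: "Pm i = Pm (i mod T)" for i
    unfolding Pm_def using Bp_mod[of A c i] unfolding T_def by simp
  have tele: "gs^2 * (y \<bullet> (Pm i *v y)) - (A (elab (ed c i)) *v y) \<bullet> (Pm (Suc i) *v (A (elab (ed c i)) *v y))
      \<ge> (3/4) * gs^2 * (norm y)\<^sup>2" for i y
  proof -
    define u where "u k = (norm (Bp A c i k *v y))\<^sup>2 / gs^(2*k)" for k
    have a: "(A (elab (ed c i)) *v y) \<bullet> (Pm (Suc i) *v (A (elab (ed c i)) *v y)) = gs^2 * (\<Sum>k<K. u (Suc k))"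
    proof -
      have "(norm (Bp A c (Suc i) k *v (A (elab (ed c i)) *v y)))\<^sup>2 / gs^(2*k) = gs^2 * u (Suc k)" for k
      proof -
        have "Bp A c (Suc i) k *v (A (elab (ed c i)) *v y) = Bp A c i (Suc k) *v y"
          by (simp add: Bp_Suc matrix_vector_mul_assoc)
        then show ?thesis unfolding u_def using g0 by (simp add: field_simps power_add power2_eq_square)
      qed
      then show ?thesis unfolding Pm_qf by (simp add: sum_distrib_left)
    qed
    have b: "gs^2 * (y \<bullet> (Pm i *v y)) = gs^2 * (\<Sum>k<K. u k)" unfolding Pm_qf u_def ..
    have c: "(\<Sum>k<K. u k) - (\<Sum>k<K. u (Suc k)) = u 0 - u K"
      using sum_lessThan_telescope[of u K] by (simp add: sum_subtractf)
    have u0: "u 0 = (norm y)\<^sup>2" unfolding u_def by (simp add: Bp_zero)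
    have uK: "u K \<le> (norm y)\<^sup>2 / 4"
    proof -
      have "norm (Bp A c i K *v y) \<le> gs^K / 2 * norm y"
        using mnorm_bound[of "Bp A c i K" y] Bsmall[of i] by (meson mult_right_mono norm_ge_zero order_trans)
      then have "(norm (Bp A c i K *v y))\<^sup>2 \<le> (gs^K / 2 * norm y)\<^sup>2"
        by (intro power_mono) auto
      moreover have "(gs^K / 2 * norm y)\<^sup>2 = gs^(2*K) * ((norm y)\<^sup>2 / 4)"
      proof -
        have e: "gs^(2*K) = gs^K * gs^K" by (simp add: mult_2 power_add)
        show ?thesis unfolding e by (simp add: power2_eq_square field_simps)
      qed
      ultimately have "(norm (Bp A c i K *v y))\<^sup>2 \<le> gs^(2*K) * ((norm y)\<^sup>2 / 4)" by simp
      then show ?thesis unfolding u_def using g0 by (simp add: field_simps)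
    qed
    have "gs^2 * (y \<bullet> (Pm i *v y)) - (A (elab (ed c i)) *v y) \<bullet> (Pm (Suc i) *v (A (elab (ed c i)) *v y))
        = gs^2 * (u 0 - u K)" unfolding a b c[symmetric] by (simp add: right_diff_distrib)
    also have "\<dots> \<ge> gs^2 * ((norm y)\<^sup>2 - (norm y)\<^sup>2 / 4)"
      using uK u0 by (intro mult_left_mono) auto
    finally show ?thesis by simp
  qed
  define idxv where "idxv v = (THE i. i < T \<and> esrc (c!i) = v)" for v
  define P where "P v = (if v \<in> esrc ` set c then Pm (idxv v) else 0)" for v
  have P_at: "P (esrc (c!i)) = Pm i" if i: "i < T" for i
  proof -
    have "idxv (esrc (c!i)) = i"
      unfolding idxv_def
    proof (rule the_equality)
      show "i < T \<and> esrc (c!i) = esrc (c!i)" using i by simp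
      fix j assume j: "j < T \<and> esrc (c!j) = esrc (c!i)"
      then have "map esrc c ! j = map esrc c ! i" using i unfolding T_def by simp
      then show "j = i" using nth_eq_iff_index_eq[OF cyc_facts(4), of j i] i j unfolding T_def by simp
    qed
    moreover have "esrc (c!i) \<in> esrc ` set c" using i unfolding T_def by simp
    ultimately show ?thesis unfolding P_def by simp
  qed
  have P_sym: "transpose (P v) = P v" for v
    unfolding P_def by (simp add: Pm_sym transpose_zero')
  have P_nn: "0 \<le> y \<bullet> (P v *v y)" for v y
    unfolding P_def using Pm_nn by simp
  have cyc_edge: "gs^2 * (y \<bullet> (P (esrc e) *v y)) - (A (elab e) *v y) \<bullet> (P (etgt e) *v (A (elab e) *v y))
      \<ge> (3/4) * gs^2 * (norm y)\<^sup>2" if e: "e \<in> set c" for e y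
  proof -
    obtain i where i: "i < T" "e = c!i" using e unfolding T_def by (metis in_set_conv_nth)
    have edi: "ed c i = e" unfolding ed_def using i unfolding T_def by simp
    have src: "P (esrc e) = Pm i" using P_at[OF i(1)] i(2) by simp
    have "etgt e = esrc (ed c (Suc i))" using ed_succ[OF cyc_facts(1)] edi by metis
    also have "ed c (Suc i) = c ! (Suc i mod T)" unfolding ed_def T_def ..
    finally have "P (etgt e) = Pm (Suc i mod T)" using P_at[of "Suc i mod T"] T0 by simp
    then have tgt: "P (etgt e) = Pm (Suc i)" using Pm_mod[of "Suc i"] by simp
    show ?thesis using tele[where i=i and y=y] unfolding src tgt edi .
  qed
  define FP where "FP e = gs\<^sup>2 *\<^sub>R P (esrc e) - transpose (A (elab e)) ** P (etgt e) ** A (elab e)" for e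
  define FQ where "FQ e = gs\<^sup>2 *\<^sub>R Q (esrc e) - transpose (A (elab e)) ** Q (etgt e) ** A (elab e)" for e
  define D where "D = (\<Sum>e\<in>E. mnorm (FP e))"
  have D0: "0 \<le> D" unfolding D_def by (simp add: sum_nonneg mnorm_nonneg)
  have FP_bound: "\<bar>y \<bullet> (FP e *v y)\<bar> \<le> D * (norm y)\<^sup>2" if e: "e \<in> E" for e y
  proof -
    have "mnorm (FP e) \<le> D" unfolding D_def
      by (rule member_le_sum) (use e finE mnorm_nonneg in auto)
    then show ?thesis using qf_bound[of y "FP e"] by (meson mult_right_mono order_trans zero_le_power2)
  qed
  obtain \<epsilon> where eps: "\<epsilon> > 0" "\<forall>e\<in>E - set c. \<forall>y. \<epsilon> * (norm y)\<^sup>2 \<le> y \<bullet> (FQ e *v y)"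
  proof -
    have "\<exists>\<epsilon>>0. \<forall>e\<in>E - set c. \<forall>y. \<epsilon> * (norm y)\<^sup>2 \<le> y \<bullet> (FQ e *v y)"
    proof (rule finite_uniform_pos)
      show "finite (E - set c)" using finE by simp
      fix e assume e: "e \<in> E - set c"
      have "lambda_min (FQ e) \<noteq> 0" using e Eprime unfolding FQ_def by blast
      then have "\<forall>y. y \<noteq> 0 \<longrightarrow> 0 < y \<bullet> (FQ e *v y)"
        using lambda_min_zero[of "FQ e"] psdE[of e] e unfolding FQ_def by blast
      then show "\<exists>\<epsilon>>0. \<forall>y. \<epsilon> * (norm y)\<^sup>2 \<le> y \<bullet> (FQ e *v y)" using pd_lower[of "FQ e"] by blast
    next
      fix e and a b :: real
      assume "\<forall>y. b * (norm y)\<^sup>2 \<le> y \<bullet> (FQ e *v y)" "0 < a" "a \<le> b"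
      then show "\<forall>y. a * (norm y)\<^sup>2 \<le> y \<bullet> (FQ e *v y)"
        by (meson mult_right_mono order_trans zero_le_power2)
    qed
    then show ?thesis using that by blast
  qed
  define t where "t = \<epsilon> / (2 * (D + 1))"
  have t0: "0 < t" unfolding t_def using eps(1) D0 by simp
  have tD: "t * D \<le> \<epsilon> / 2" unfolding t_def using eps(1) D0 by (simp add: field_simps)
  define Q' where "Q' v = Q v + t *\<^sub>R P v" for v
  define \<mu> where "\<mu> = min (\<epsilon> / 2) (t * (3/4) * gs^2)"
  have \<mu>0: "0 < \<mu>" unfolding \<mu>_def using eps(1) t0 g0 by simp
  have FQ'_eq: "gs^2 * (y \<bullet> (Q' (esrc e) *v y)) - (A (elab e) *v y) \<bullet> (Q' (etgt e) *v (A (elab e) *v y))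
      = y \<bullet> (FQ e *v y) + t * (y \<bullet> (FP e *v y))" for e y
    unfolding Q'_def FQ_def FP_def qf_expand qf_add_scale by (simp add: algebra_simps)
  have FQ'_pos: "gs^2 * (y \<bullet> (Q' (esrc e) *v y)) - (A (elab e) *v y) \<bullet> (Q' (etgt e) *v (A (elab e) *v y))
      \<ge> \<mu> * (norm y)\<^sup>2" if e: "e \<in> E" for e y
  proof (cases "e \<in> set c")
    case True
    have "0 \<le> y \<bullet> (FQ e *v y)" using psdE[OF e] unfolding FQ_def pos_semidef_def by blast
    moreover have "(3/4) * gs^2 * (norm y)\<^sup>2 \<le> y \<bullet> (FP e *v y)"
      using cyc_edge[OF True, of y] unfolding FP_def qf_expand by simp
    then have "t * ((3/4) * gs^2 * (norm y)\<^sup>2) \<le> t * (y \<bullet> (FP e *v y))"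
      using t0 by (intro mult_left_mono) auto
    moreover have "\<mu> * (norm y)\<^sup>2 \<le> t * (3/4) * gs^2 * (norm y)\<^sup>2"
      unfolding \<mu>_def by (intro mult_right_mono) auto
    ultimately show ?thesis unfolding FQ'_eq by (simp add: mult.assoc)
  next
    case False
    have "\<epsilon> * (norm y)\<^sup>2 \<le> y \<bullet> (FQ e *v y)" using eps(2) e False by blast
    moreover have "- (t * D * (norm y)\<^sup>2) \<le> t * (y \<bullet> (FP e *v y))"
    proof -
      have "- (D * (norm y)\<^sup>2) \<le> y \<bullet> (FP e *v y)" using FP_bound[OF e, of y] by linarith
      then have "t * (- (D * (norm y)\<^sup>2)) \<le> t * (y \<bullet> (FP e *v y))" using t0 by (intro mult_left_mono) auto
      then show ?thesis by (simp add: mult.assoc)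
    qed
    moreover have "t * D * (norm y)\<^sup>2 \<le> \<epsilon> / 2 * (norm y)\<^sup>2" using tD by (intro mult_right_mono) auto
    moreover have "\<mu> * (norm y)\<^sup>2 \<le> \<epsilon> / 2 * (norm y)\<^sup>2" unfolding \<mu>_def by (intro mult_right_mono) auto
    ultimately show ?thesis unfolding FQ'_eq by (simp add: field_simps)
  qed
  define U where "U = (\<Sum>v\<in>V. mnorm (Q' v)) + 1"
  have U0: "0 < U" unfolding U_def by (simp add: add_nonneg_pos sum_nonneg mnorm_nonneg)
  have U_bound: "y \<bullet> (Q' v *v y) \<le> U * (norm y)\<^sup>2" if v: "v \<in> V" for v y
  proof -
    have "mnorm (Q' v) \<le> U" unfolding U_def
      using member_le_sum[of v V "\<lambda>v. mnorm (Q' v)"] v finV mnorm_nonneg by force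
    then show ?thesis using qf_bound[of y "Q' v"] by (meson abs_le_D1 mult_right_mono order_trans zero_le_power2)
  qed
  define \<delta> where "\<delta> = min (\<mu> / U) (gs^2 / 2)"
  have \<delta>0: "0 < \<delta>" unfolding \<delta>_def using \<mu>0 U0 g0 by simp
  have \<delta>U: "\<delta> * U \<le> \<mu>" unfolding \<delta>_def using U0 by (simp add: min_def field_simps)
  define g' where "g' = sqrt (gs^2 - \<delta>)"
  have gd: "0 \<le> gs^2 - \<delta>"
  proof -
    have "\<delta> \<le> gs^2 / 2" unfolding \<delta>_def by (rule min.cobounded2)
    moreover have "0 \<le> gs^2" by simp
    ultimately show ?thesis by linarith
  qed
  have g'2: "g'^2 = gs^2 - \<delta>" unfolding g'_def using gd by simp
  have g'0: "0 \<le> g'" unfolding g'_def using gd by simp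
  have g'lt: "g' < gs"
  proof -
    have "g' < sqrt (gs^2)" unfolding g'_def by (rule real_sqrt_less_mono) (use \<delta>0 in simp)
    then show ?thesis using g0 by simp
  qed
  have Q'_sym: "v \<in> V \<Longrightarrow> transpose (Q' v) = Q' v" for v
    unfolding Q'_def by (simp add: transpose_add transpose_scalar P_sym symQ)
  have feas: "quad_feasible V E A g' Q'"
    unfolding quad_feasible_def
  proof (intro conjI ballI)
    fix v assume v: "v \<in> V"
    show "pos_def (Q' v)" unfolding pos_def_def symmetric_mat_def
    proof (intro conjI allI impI)
      show "transpose (Q' v) = Q' v" using Q'_sym[OF v] .
      fix y :: "real^'n" assume "y \<noteq> 0"
      then have "0 < y \<bullet> (Q v *v y)" using pdQ[OF v] unfolding pos_def_def by blast
      moreover have "0 \<le> t * (y \<bullet> (P v *v y))" using t0 P_nn by simp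
      ultimately show "0 < y \<bullet> (Q' v *v y)" unfolding Q'_def qf_add_scale by simp
    qed
  next
    fix e assume e: "e \<in> E"
    have ends: "esrc e \<in> V" "etgt e \<in> V" using endpoints[OF e] by auto
    show "pos_semidef (g'\<^sup>2 *\<^sub>R Q' (esrc e) - transpose (A (elab e)) ** Q' (etgt e) ** A (elab e))"
      unfolding pos_semidef_def
    proof (intro conjI allI)
      show "symmetric_mat (g'\<^sup>2 *\<^sub>R Q' (esrc e) - transpose (A (elab e)) ** Q' (etgt e) ** A (elab e))"
        by (rule sym_combo) (use Q'_sym ends in auto)
      fix y :: "real^'n"
      have "y \<bullet> ((g'\<^sup>2 *\<^sub>R Q' (esrc e) - transpose (A (elab e)) ** Q' (etgt e) ** A (elab e)) *v y)
          = (gs^2 * (y \<bullet> (Q' (esrc e) *v y)) - (A (elab e) *v y) \<bullet> (Q' (etgt e) *v (A (elab e) *v y)))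
            - \<delta> * (y \<bullet> (Q' (esrc e) *v y))"
        unfolding qf_expand g'2 by (simp add: algebra_simps)
      moreover have "\<delta> * (y \<bullet> (Q' (esrc e) *v y)) \<le> \<delta> * (U * (norm y)\<^sup>2)"
        using U_bound[OF ends(1), of y] \<delta>0 by (intro mult_left_mono) auto
      moreover have "\<delta> * (U * (norm y)\<^sup>2) \<le> \<mu> * (norm y)\<^sup>2"
        using \<delta>U by (simp add: mult.assoc[symmetric] mult_right_mono)
      ultimately show "0 \<le> y \<bullet> ((g'\<^sup>2 *\<^sub>R Q' (esrc e) - transpose (A (elab e)) ** Q' (etgt e) ** A (elab e)) *v y)"
        using FQ'_pos[OF e, of y] by linarith
    qed
  qed
  have "gs \<le> g'" by (rule gs_le[OF g'0 feas])
  then show False using g'lt by simp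
qed

end




lemma min_pow_bound:
  fixes g :: real
  assumes g: "0 < g" and tN: "t \<le> N" and Nt: "N \<le> t + T"
  shows "min 1 (g^T) * g^t \<le> g^N"
proof (cases "1 \<le> g")
  case True
  have "g^t \<le> g^N" by (rule power_increasing[OF tN True])
  moreover have "min 1 (g^T) * g^t \<le> 1 * g^t" using g by (intro mult_right_mono) auto
  ultimately show ?thesis by simp
next
  case False
  have "g^(t+T) \<le> g^N" by (rule power_decreasing[OF Nt]) (use g False in auto)
  moreover have "min 1 (g^T) * g^t \<le> g^T * g^t" using g by (intro mult_right_mono) auto
  ultimately show ?thesis by (simp add: power_add mult.commute)
qed

lemma powr_inv_tendsto: "0 < (a::real) \<Longrightarrow> (\<lambda>t. a powr (1 / real t)) \<longlonglongrightarrow> 1"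
proof -
  assume a: "0 < a"
  have "(\<lambda>t. root t a) \<longlonglongrightarrow> 1" by (rule LIMSEQ_root_const[OF a])
  moreover have "\<forall>\<^sub>F t in sequentially. root t a = a powr (1 / real t)"
    using eventually_gt_at_top[of 0] by eventually_elim (use a in \<open>simp add: root_powr_inverse\<close>)
  ultimately show ?thesis by (rule Lim_transform_eventually)
qed

context cs
begin

lemma multinorm_eq: "multinorm_value E A (quad_norm Q) = gs"
  unfolding multinorm_value_def
proof (rule cInf_eq_minimum)
  show "gs \<in> {\<gamma>. \<forall>e\<in>E. \<forall>x. quad_norm Q (etgt e) (A (elab e) *v x) \<le> \<gamma> * quad_norm Q (esrc e) x}"
  proof (intro CollectI ballI allI)
    fix e x assume e: "e \<in> E"
    have "quad_norm Q (etgt e) (A (elab e) *v x) \<le> sqrt (gs\<^sup>2 * (x \<bullet> (Q (esrc e) *v x)))"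
      unfolding quad_norm_def by (rule real_sqrt_le_mono[OF edge_ineq[OF e]])
    also have "\<dots> = gs * quad_norm Q (esrc e) x"
      unfolding quad_norm_def using gs_nonneg by (simp add: real_sqrt_mult)
    finally show "quad_norm Q (etgt e) (A (elab e) *v x) \<le> gs * quad_norm Q (esrc e) x" .
  qed
next
  fix g assume "g \<in> {\<gamma>. \<forall>e\<in>E. \<forall>x. quad_norm Q (etgt e) (A (elab e) *v x) \<le> \<gamma> * quad_norm Q (esrc e) x}"
  then have h: "\<And>e x. e \<in> E \<Longrightarrow> quad_norm Q (etgt e) (A (elab e) *v x) \<le> g * quad_norm Q (esrc e) x" by auto
  have qnn: "0 \<le> y \<bullet> (Q v *v y)" if "v \<in> V" for v y
    using pdQ[OF that] unfolding pos_def_def by (cases "y = 0") (auto intro: less_imp_le)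
  have g0: "0 \<le> g"
  proof (rule ccontr)
    assume "\<not> 0 \<le> g"
    then have gn: "g < 0" by simp
    obtain u :: "real^'n" where u: "norm u = 1" using exists_unit by blast
    have u0: "u \<noteq> 0" using u by auto
    have e0: "hd c \<in> E" using cyc_facts(2,3) by auto
    have pos: "0 < quad_norm Q (esrc (hd c)) u"
      using pdQ endpoints[OF e0] u0 unfolding quad_norm_def pos_def_def by simp
    have "0 \<le> quad_norm Q (etgt (hd c)) (A (elab (hd c)) *v u)"
      unfolding quad_norm_def using qnn endpoints[OF e0] by simp
    moreover have "g * quad_norm Q (esrc (hd c)) u < 0" using gn pos by (simp add: mult_neg_pos)
    ultimately show False using h[OF e0, of u] by linarith
  qed
  have "quad_feasible V E A g Q"
    unfolding quad_feasible_def
  proof (intro conjI ballI)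
    fix v assume "v \<in> V" then show "pos_def (Q v)" by (rule pdQ)
  next
    fix e assume e: "e \<in> E"
    have ends: "esrc e \<in> V" "etgt e \<in> V" using endpoints[OF e] by auto
    show "pos_semidef (g\<^sup>2 *\<^sub>R Q (esrc e) - transpose (A (elab e)) ** Q (etgt e) ** A (elab e))"
      unfolding pos_semidef_def
    proof (intro conjI allI)
      show "symmetric_mat (g\<^sup>2 *\<^sub>R Q (esrc e) - transpose (A (elab e)) ** Q (etgt e) ** A (elab e))"
        by (rule sym_combo) (use symQ ends in auto)
      fix x :: "real^'n"
      have a: "0 \<le> (A (elab e) *v x) \<bullet> (Q (etgt e) *v (A (elab e) *v x))" using qnn ends by simp
      have b: "0 \<le> x \<bullet> (Q (esrc e) *v x)" using qnn ends by simp
      have "sqrt ((A (elab e) *v x) \<bullet> (Q (etgt e) *v (A (elab e) *v x))) \<le> g * sqrt (x \<bullet> (Q (esrc e) *v x))"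
        using h[OF e, of x] unfolding quad_norm_def .
      then have "(sqrt ((A (elab e) *v x) \<bullet> (Q (etgt e) *v (A (elab e) *v x))))\<^sup>2 \<le> (g * sqrt (x \<bullet> (Q (esrc e) *v x)))\<^sup>2"
        by (intro power_mono) (use a in auto)
      then have "(A (elab e) *v x) \<bullet> (Q (etgt e) *v (A (elab e) *v x)) \<le> g\<^sup>2 * (x \<bullet> (Q (esrc e) *v x))"
        using a b by (simp add: power_mult_distrib)
      then show "0 \<le> x \<bullet> ((g\<^sup>2 *\<^sub>R Q (esrc e) - transpose (A (elab e)) ** Q (etgt e) ** A (elab e)) *v x)"
        unfolding qf_expand by simp
    qed
  qed
  then show "gs \<le> g" by (rule gs_le[OF g0])
qed

end




context cs
begin

lemma cjsr_eq:
  assumes rho: "spectral_radius (path_prod A c) = gs ^ length c"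
  shows "cjsr E A = gs"
proof -
  define T where "T = length c"
  have T0: "0 < T" using T_pos T_def by simp
  define f where "f t = Max ((\<lambda>ss. mnorm (label_prod A ss) powr (1 / real t)) ` accepted E t)" for t
  have cj: "cjsr E A = lim f" unfolding cjsr_def f_def ..
  obtain K where K: "K > 0" "\<forall>p. is_path E p \<longrightarrow> p \<noteq> [] \<longrightarrow> mnorm (path_prod A p) \<le> K * gs ^ length p"
    using path_norm by blast
  obtain M1 where M1: "M1 > 0" "\<And>i l. l \<le> T \<Longrightarrow> mnorm (Bp A c i l) \<le> M1"
    using M1_bound unfolding T_def by blast
  have fin: "finite (accepted E t)" for t
  proof -
    have "accepted E t \<subseteq> map elab ` {p. set p \<subseteq> E \<and> length p = t}"
      unfolding accepted_def is_path_def by auto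
    moreover have "finite (map elab ` {p. set p \<subseteq> E \<and> length p = t})"
      using finite_lists_length_eq[OF finE] by simp
    ultimately show ?thesis by (rule finite_subset)
  qed
  have mem: "map elab (map (\<lambda>j. ed c (0+j)) [0..<t]) \<in> accepted E t" for t
    unfolding accepted_def using Bp_path[OF cyc_facts(1), of 0 t] by force
  have lp_mem: "label_prod A (map elab (map (\<lambda>j. ed c (0+j)) [0..<t])) = Bp A c 0 t" for t
    using Bp_is_path_prod[of A c 0 t] unfolding path_prod_def by simp
  have upper: "f t \<le> K powr (1 / real t) * gs" if t: "0 < t" for t
    unfolding f_def
  proof (rule Max.boundedI)
    show "finite ((\<lambda>ss. mnorm (label_prod A ss) powr (1 / real t)) ` accepted E t)" using fin by simp
    show "(\<lambda>ss. mnorm (label_prod A ss) powr (1 / real t)) ` accepted E t \<noteq> {}" using mem by blast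
    fix b assume "b \<in> (\<lambda>ss. mnorm (label_prod A ss) powr (1 / real t)) ` accepted E t"
    then obtain p where p: "is_path E p" "length p = t" "b = mnorm (path_prod A p) powr (1 / real t)"
      unfolding accepted_def path_prod_def by auto
    have "p \<noteq> []" using p(2) t by auto
    then have "mnorm (path_prod A p) \<le> K * gs ^ t" using K(2) p by auto
    then have "b \<le> (K * gs ^ t) powr (1 / real t)"
      unfolding p(3) by (intro powr_mono2) (auto simp: mnorm_nonneg)
    also have "\<dots> = K powr (1 / real t) * (gs ^ t) powr (1 / real t)"
      using K(1) gs_nonneg by (simp add: powr_mult)
    also have "\<dots> = K powr (1 / real t) * gs" using pow_powr_inv[OF gs_nonneg t] by simp
    finally show "b \<le> K powr (1 / real t) * gs" .
  qed
  have lower0: "mnorm (Bp A c 0 t) powr (1 / real t) \<le> f t" for t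
    unfolding f_def using fin mem lp_mem by (intro Max_ge) (auto intro!: image_eqI[where x="map elab (map (\<lambda>j. ed c (0+j)) [0..<t])"])
  show ?thesis
  proof (cases "gs = 0")
    case True
    have "\<forall>\<^sub>F t in sequentially. f t = 0"
      using eventually_gt_at_top[of 0]
    proof eventually_elim
      case (elim t)
      have "f t \<le> 0" using upper[OF elim] True by simp
      moreover have "0 \<le> f t" using lower0[of t] by (meson order_trans powr_ge_zero)
      ultimately show ?case by simp
    qed
    then have "f \<longlonglongrightarrow> 0" by (rule tendsto_eventually)
    then show ?thesis using cj True by (simp add: limI)
  next
    case False
    then have g0: "0 < gs" using gs_nonneg by simp
    define a where "a = min 1 (gs ^ T) / M1"
    have a0: "0 < a" unfolding a_def using g0 M1(1) by simp
    have lowB: "a * gs^t \<le> mnorm (Bp A c 0 t)" if t: "0 < t" for t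
    proof -
      define q where "q = t div T"
      define r where "r = Suc q * T - t"
      have qt: "q * T \<le> t" unfolding q_def by (simp add: div_times_less_eq_dividend)
      have tq: "t < Suc q * T"
      proof -
        have e: "t div T * T + t mod T = t" by (rule div_mult_mod_eq)
        have m: "t mod T < T" using T0 by simp
        have "t < t div T * T + T" using e m by linarith
        then show ?thesis unfolding q_def by simp
      qed
      have rT: "r \<le> T" unfolding r_def using qt by simp
      have tr: "t + r = Suc q * T" unfolding r_def using tq by simp
      have "mpow (path_prod A c) (Suc q) = Bp A c 0 (Suc q * T)" unfolding T_def by (rule Bp_pow[symmetric])
      also have "\<dots> = Bp A c t r ** Bp A c 0 t" unfolding tr[symmetric] using Bp_split[of A c 0 t r] by simp
      finally have mp: "mpow (path_prod A c) (Suc q) = Bp A c t r ** Bp A c 0 t" .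
      have "(gs ^ T) ^ Suc q \<le> mnorm (mpow (path_prod A c) (Suc q))"
        using sr_gelfand[of "path_prod A c" "Suc q"] rho unfolding T_def by simp
      also have "\<dots> \<le> mnorm (Bp A c t r) * mnorm (Bp A c 0 t)" unfolding mp by (rule mnorm_mult)
      also have "\<dots> \<le> M1 * mnorm (Bp A c 0 t)" by (rule mult_right_mono[OF M1(2)[OF rT] mnorm_nonneg])
      finally have h1: "(gs ^ T) ^ Suc q \<le> M1 * mnorm (Bp A c 0 t)" .
      have "min 1 (gs^T) * gs^t \<le> gs^(Suc q * T)"
        by (rule min_pow_bound[OF g0]) (use tq tr qt in auto)
      also have "gs^(Suc q * T) = (gs ^ T) ^ Suc q" by (metis power_mult mult.commute)
      finally have "min 1 (gs^T) * gs^t \<le> M1 * mnorm (Bp A c 0 t)" using h1 by simp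
      then show ?thesis unfolding a_def using M1(1) by (simp add: field_simps)
    qed
    have lower: "a powr (1 / real t) * gs \<le> f t" if t: "0 < t" for t
    proof -
      have "a powr (1 / real t) * gs = (a * gs^t) powr (1 / real t)"
        using a0 g0 pow_powr_inv[OF gs_nonneg t] by (simp add: powr_mult)
      also have "\<dots> \<le> mnorm (Bp A c 0 t) powr (1 / real t)"
        using lowB[OF t] a0 g0 by (intro powr_mono2) auto
      also have "\<dots> \<le> f t" by (rule lower0)
      finally show ?thesis .
    qed
    have lim1: "(\<lambda>t. a powr (1 / real t) * gs) \<longlonglongrightarrow> 1 * gs"
      by (intro tendsto_mult_right powr_inv_tendsto a0)
    have lim2: "(\<lambda>t. K powr (1 / real t) * gs) \<longlonglongrightarrow> 1 * gs"
      by (intro tendsto_mult_right powr_inv_tendsto K(1))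
    have "f \<longlonglongrightarrow> gs"
    proof (rule tendsto_sandwich[of "\<lambda>t. a powr (1 / real t) * gs" f sequentially "\<lambda>t. K powr (1 / real t) * gs"])
      show "\<forall>\<^sub>F t in sequentially. a powr (1 / real t) * gs \<le> f t"
        using eventually_gt_at_top[of 0] by eventually_elim (rule lower)
      show "\<forall>\<^sub>F t in sequentially. f t \<le> K powr (1 / real t) * gs"
        using eventually_gt_at_top[of 0] by eventually_elim (rule upper)
    qed (use lim1 lim2 in simp_all)
    then show ?thesis using cj by (simp add: limI)
  qed
qed

end

theorem theorem3p12:
  fixes V :: "'v set" and E :: "('v,'s) edge set"
    and A :: "'s \<Rightarrow> real^'n^'n" and Q :: "'v \<Rightarrow> real^'n^'n"
  assumes aut: "automaton V E"
    and attained: "quad_feasible V E A (gamma_star V E A) Q"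
    and cyc: "simple_cycle E c"
    and Eprime: "{e \<in> E. lambda_min ((gamma_star V E A)\<^sup>2 *\<^sub>R Q (esrc e)
                   - transpose (A (elab e)) ** Q (etgt e) ** A (elab e)) = 0} = set c"
  shows "multinorm_value E A (quad_norm Q) = gamma_star V E A
     \<and> extremal E A (quad_norm Q)
     \<and> cjsr E A = spectral_radius (path_prod A c) powr (1 / real (length c))"
proof -
  interpret cs V E A Q c using aut attained cyc by (rule cs.intro)
  have rho: "spectral_radius (path_prod A c) = gamma_star V E A ^ length c"
    using rho_le rho_ge[OF Eprime] by (rule antisym)
  have m: "multinorm_value E A (quad_norm Q) = gamma_star V E A" by (rule multinorm_eq)
  have cj: "cjsr E A = gamma_star V E A" by (rule cjsr_eq[OF rho])
  have r: "spectral_radius (path_prod A c) powr (1 / real (length c)) = gamma_star V E A"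
    unfolding rho by (rule pow_powr_inv[OF gs_nonneg T_pos])
  show ?thesis using m cj r unfolding extremal_def by simp
qed



end
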